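(* Assume the Framework and the Purification Postulate. Let $\Psi\in\mathfrak S_1(\mathrm A\tilde{\mathrm A})$ be a pure state that is dynamically faithful for $\mathrm A$, let $\tilde\omega:=(e_{\mathrm A}\otimes\mathcal I_{\tilde{\mathrm A}})\Psi$, and for $\mathcal C\in\mathfrak T(\mathrm A,\mathrm B)$ set $R_{\mathcal C}:=(\mathcal C\otimes\mathcal I_{\tilde{\mathrm A}})\Psi\in\mathfrak S(\mathrm B\tilde{\mathrm A})$. Then: (1) $\{\mathcal C_i\}_{i\in X}\mapsto\{R_{\mathcal C_i}\}_{i\in X}$ is a bijection between tests from $\mathrm A$ to $\mathrm B$ and preparation-tests $\{R_i\}_{i\in X}$ of $\mathrm B\tilde{\mathrm A}$ satisfying $\sum_{i\in X}(e_{\mathrm B}\otimes\mathcal I_{\tilde{\mathrm A}})R_i=\tilde\omega$; (2) $\mathcal C$ is atomic if and only if $R_{\mathcal C}$ is pure; (3) $\mathcal C\mapsto R_{\mathcal C}$ is a bijection between $\mathfrak T(\mathrm A,\mathrm B)$ and the set of states $R\in\mathfrak S(\mathrm B\tilde{\mathrm A})$ with $(e_{\mathrm B}\otimes\mathcal I_{\tilde{\mathrm A}})R\in D_{\tilde\omega}$.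
   Context: Framework. We work in an operational-probabilistic theory: there is a collection of systems $\mathrm A,\mathrm B,\dots$, closed under a composition $\mathrm A\mathrm B$ (associative, symmetric up to a reversible swap, with a trivial system $\mathrm I$ satisfying $\mathrm A\mathrm I=\mathrm A$); for each pair of systems a set $\mathfrak T(\mathrm A,\mathrm B)$ of transformations; a test from $\mathrm A$ to $\mathrm B$ is a finite collection $\{\mathcal C_i\}_{i\in X}\subseteq\mathfrak T(\mathrm A,\mathrm B)$, and every transformation belongs to some test. Tests are closed under sequential composition, parallel composition ($\otimes$), coarse-graining (summing outcomes over the blocks of a partition of $X$) and conditioning (choosing the next test depending on the outcome of the previous one). States of $\mathrm A$ are the elements of $\mathfrak S(\mathrm A):=\mathfrak T(\mathrm I,\mathrm A)$, effects are the elements of $\mathfrak T(\mathrm A,\mathrm I)$, and transformations $\mathrm I\to\mathrm I$ are probabilities in $[0,1]$ (those of a test sum to $1$; composition is multiplication). An effect $a$ and a state $\rho$ give the probability $(a|\rho)$. States (effects) are identified when they give equal probabilities on all effects (states); transformations $\mathcal C,\mathcal C'$ are identified when $\mathcal C\otimes\mathcal I_{\mathrm S}$ and $\mathcal C'\otimes\mathcal I_{\mathrm S}$ act identically on all states of $\mathrm A\mathrm S$ for every system $\mathrm S$. States span a finite-dimensional real vector space $\mathfrak S_{\mathbb R}(\mathrm A)$, transformations act linearly, and $\mathfrak T_{\mathbb R}(\mathrm A,\mathrm B)$ is the real span of $\mathfrak T(\mathrm A,\mathrm B)$. Standing assumptions: (i) causality: each system $\mathrm A$ has a unique deterministic effect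 $e_{\mathrm A}$ (the effect forming a one-outcome observation test), and $e_{\mathrm A\mathrm B}=e_{\mathrm A}\otimes e_{\mathrm B}$; (ii) local discriminability: if two states of $\mathrm A\mathrm B$ differ, some product effect $a\otimes b$ gives them different probabilities; (iii) all sets of states are closed, the theory is not deterministic (hence all sets of states, effects and transformations are convex), and perfectly distinguishable states exist. A state $\rho$ is normalized if $(e|\rho)=1$; $\mathfrak S_1(\mathrm A)$ is the set of normalized states. A channel is a $\mathcal C\in\mathfrak T(\mathrm A,\mathrm B)$ with $e_{\mathrm B}\circ\mathcal C=e_{\mathrm A}$. A channel $\mathcal U\in\mathfrak T(\mathrm A,\mathrm B)$ is reversible if some channel $\mathcal W\in\mathfrak T(\mathrm B,\mathrm A)$ satisfies $\mathcal W\mathcal U=\mathcal I_{\mathrm A}$, $\mathcal U\mathcal W=\mathcal I_{\mathrm B}$; $\mathbf G_{\mathrm A}$ is the group of reversible channels on $\mathrm A$. The marginal of a state $\sigma$ of $\mathrm A\mathrm B$ on $\mathrm A$ is $(\mathcal I_{\mathrm A}\otimes e_{\mathrm B})\sigma$. Refinement. For $\mathcal C\in\mathfrak T(\mathrm A,\mathrm B)$, write $\mathcal D\prec\mathcal C$ if there are a test $\{\mathcal D_j\}_{j\in Y}$ and $Y_0\subseteq Y$ with $\mathcal C=\sum_{j\in Y_0}\mathcal D_j$ and $\mathcal D\in\{\mathcal D_j\}_{j\in Y_0}$; the refinement set is $D_{\mathcal C}=\{\mathcal D:\mathcal D\prec\mathcal C\}$. $\mathcal C$ is atomic if $\mathcal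 D\prec\mathcal C$ implies $\mathcal D=\lambda\mathcal C$ for some $\lambda\in[0,1]$. A pure state is an atomic state; a state is mixed otherwise. A state $\omega$ of $\mathrm A$ is internal if $\mathrm{Span}(D_\omega)=\mathfrak S_{\mathbb R}(\mathrm A)$. Purification Postulate. For every $\rho\in\mathfrak S_1(\mathrm A)$ there are a system $\mathrm B$ and a pure $\Psi\in\mathfrak S_1(\mathrm A\mathrm B)$ with $(\mathcal I_{\mathrm A}\otimes e_{\mathrm B})\Psi=\rho$ (a purification of $\rho$, with purifying system $\mathrm B$); and if $\Psi,\Psi'\in\mathfrak S_1(\mathrm A\mathrm B)$ are purifications of the same state, then $\Psi'=(\mathcal I_{\mathrm A}\otimes\mathcal U)\Psi$ for some $\mathcal U\in\mathbf G_{\mathrm B}$. A state $\sigma\in\mathfrak S(\mathrm A\mathrm C)$ is dynamically faithful for system $\mathrm A$ if for every system $\mathrm B$ and every $\mathcal A,\mathcal A'\in\mathfrak T(\mathrm A,\mathrm B)$, $(\mathcal A\otimes\mathcal I_{\mathrm C})\sigma=(\mathcal A'\otimes\mathcal I_{\mathrm C})\sigma$ implies $\mathcal A=\mathcal A'$. A preparation-test of a system is a test from $\mathrm I$ to it. *)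

theory Defs
  imports "HOL-Analysis.Analysis"
begin

text \<open>
Systems have type 's, transformations have type 't (a real normed vector
space, so that coarse-grainings = sums, real spans and closedness make sense).
\<^item> cmp A B    : composite system AB;  unitS : the trivial system I
\<^item> Trans A B  : the set T(A,B) of transformations from A to B
\<^item> Tests A B  : the set of tests from A to B; a test with outcome set X is
               represented as a finite nonempty list (outcome i = i-th entry)
\<^item> sq g f     : sequential composition g after f
\<^item> pr f g     : parallel composition f (x) g
\<^item> idt A      : identity transformation of A
\<^item> eff A      : the deterministic effect e_A
\<^item> swp A B    : the swap AB -> BA
Probabilities (transformations I -> I) are the elements p *R idt I, 0 <= p <= 1;
thus the probability (a|rho) is represented by sq a rho.
\<close>

record ('s, 't) opt =
  cmp :: "'s \<Rightarrow> 's \<Rightarrow> 's"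
  unitS :: 's
  Trans :: "'s \<Rightarrow> 's \<Rightarrow> 't set"
  Tests :: "'s \<Rightarrow> 's \<Rightarrow> 't list set"
  sq :: "'t \<Rightarrow> 't \<Rightarrow> 't"
  pr :: "'t \<Rightarrow> 't \<Rightarrow> 't"
  idt :: "'s \<Rightarrow> 't"
  eff :: "'s \<Rightarrow> 't"
  swp :: "'s \<Rightarrow> 's \<Rightarrow> 't"

definition States :: "('s, 't::real_vector) opt \<Rightarrow> 's \<Rightarrow> 't set" where
  "States Th A = Trans Th (unitS Th) A"

definition Effects :: "('s, 't::real_vector) opt \<Rightarrow> 's \<Rightarrow> 't set" where
  "Effects Th A = Trans Th A (unitS Th)"

definition States1 :: "('s, 't::real_vector) opt \<Rightarrow> 's \<Rightarrow> 't set" where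
  "States1 Th A = {\<rho> \<in> States Th A. sq Th (eff Th A) \<rho> = idt Th (unitS Th)}"

definition channel :: "('s, 't::real_vector) opt \<Rightarrow> 's \<Rightarrow> 's \<Rightarrow> 't \<Rightarrow> bool" where
  "channel Th A B C \<longleftrightarrow> C \<in> Trans Th A B \<and> sq Th (eff Th B) C = eff Th A"

definition reversible :: "('s, 't::real_vector) opt \<Rightarrow> 's \<Rightarrow> 's \<Rightarrow> 't \<Rightarrow> bool" where
  "reversible Th A B U \<longleftrightarrow> channel Th A B U \<and>
     (\<exists>W. channel Th B A W \<and> sq Th W U = idt Th A \<and> sq Th U W = idt Th B)"

definition RevGroup :: "('s, 't::real_vector) opt \<Rightarrow> 's \<Rightarrow> 't set" where
  "RevGroup Th A = {U. reversible Th A A U}"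

definition marginal :: "('s, 't::real_vector) opt \<Rightarrow> 's \<Rightarrow> 's \<Rightarrow> 't \<Rightarrow> 't" where
  "marginal Th A B \<sigma> = sq Th (pr Th (idt Th A) (eff Th B)) \<sigma>"

definition refines :: "('s, 't::real_vector) opt \<Rightarrow> 's \<Rightarrow> 's \<Rightarrow> 't \<Rightarrow> 't \<Rightarrow> bool" where
  "refines Th A B D C \<longleftrightarrow>
     (\<exists>t \<in> Tests Th A B. \<exists>Y0 \<subseteq> {..<length t}.
        C = (\<Sum>j\<in>Y0. t ! j) \<and> D \<in> (\<lambda>j. t ! j) ` Y0)"

definition refset :: "('s, 't::real_vector) opt \<Rightarrow> 's \<Rightarrow> 's \<Rightarrow> 't \<Rightarrow> 't set" where
  "refset Th A B C = {D. refines Th A B D C}"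

definition atomic :: "('s, 't::real_vector) opt \<Rightarrow> 's \<Rightarrow> 's \<Rightarrow> 't \<Rightarrow> bool" where
  "atomic Th A B C \<longleftrightarrow> (\<forall>D. refines Th A B D C \<longrightarrow> (\<exists>lam. 0 \<le> lam \<and> lam \<le> 1 \<and> D = lam *\<^sub>R C))"

definition pure :: "('s, 't::real_vector) opt \<Rightarrow> 's \<Rightarrow> 't \<Rightarrow> bool" where
  "pure Th A \<rho> \<longleftrightarrow> \<rho> \<in> States Th A \<and> atomic Th (unitS Th) A \<rho>"

definition internal :: "('s, 't::real_vector) opt \<Rightarrow> 's \<Rightarrow> 't \<Rightarrow> bool" where
  "internal Th A \<omega> \<longleftrightarrow> span (refset Th (unitS Th) A \<omega>) = span (States Th A)"

definition dyn_faithful :: "('s, 't::real_vector) opt \<Rightarrow> 's \<Rightarrow> 's \<Rightarrow> 't \<Rightarrow> bool" where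
  "dyn_faithful Th A C \<sigma> \<longleftrightarrow>
     (\<forall>B \<A> \<A>'. \<A> \<in> Trans Th A B \<longrightarrow> \<A>' \<in> Trans Th A B \<longrightarrow>
        sq Th (pr Th \<A> (idt Th C)) \<sigma> = sq Th (pr Th \<A>' (idt Th C)) \<sigma> \<longrightarrow> \<A> = \<A>')"

definition opt_framework :: "('s, 't::real_normed_vector) opt \<Rightarrow> bool" where
  "opt_framework Th \<longleftrightarrow>
   \<comment> \<open>systems: associative composition with trivial system\<close>
   (\<forall>A B C. cmp Th (cmp Th A B) C = cmp Th A (cmp Th B C)) \<and>
   (\<forall>A. cmp Th A (unitS Th) = A) \<and> (\<forall>A. cmp Th (unitS Th) A = A) \<and>
   \<comment> \<open>tests are finite nonempty collections of transformations; every transformation is in a test\<close>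
   (\<forall>A B t. t \<in> Tests Th A B \<longrightarrow> t \<noteq> [] \<and> set t \<subseteq> Trans Th A B) \<and>
   (\<forall>A B. Trans Th A B = (\<Union>t\<in>Tests Th A B. set t)) \<and>
   (\<forall>A. [idt Th A] \<in> Tests Th A A) \<and>
   \<comment> \<open>sequential composition\<close>
   (\<forall>A B C f g. f \<in> Trans Th A B \<longrightarrow> g \<in> Trans Th B C \<longrightarrow> sq Th g f \<in> Trans Th A C) \<and>
   (\<forall>A B f. f \<in> Trans Th A B \<longrightarrow> sq Th (idt Th B) f = f \<and> sq Th f (idt Th A) = f) \<and>
   (\<forall>A B C D f g h. f \<in> Trans Th A B \<longrightarrow> g \<in> Trans Th B C \<longrightarrow> h \<in> Trans Th C D \<longrightarrow>
      sq Th h (sq Th g f) = sq Th (sq Th h g) f) \<and>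
   \<comment> \<open>parallel composition\<close>
   (\<forall>A B A' B' f g. f \<in> Trans Th A B \<longrightarrow> g \<in> Trans Th A' B' \<longrightarrow>
      pr Th f g \<in> Trans Th (cmp Th A A') (cmp Th B B')) \<and>
   (\<forall>A B. idt Th (cmp Th A B) = pr Th (idt Th A) (idt Th B)) \<and>
   (\<forall>A B C A' B' C' f g f' g'. f \<in> Trans Th A B \<longrightarrow> g \<in> Trans Th B C \<longrightarrow>
      f' \<in> Trans Th A' B' \<longrightarrow> g' \<in> Trans Th B' C' \<longrightarrow>
      sq Th (pr Th g g') (pr Th f f') = pr Th (sq Th g f) (sq Th g' f')) \<and>
   (\<forall>A B A' B' A'' B'' f g h. f \<in> Trans Th A B \<longrightarrow> g \<in> Trans Th A' B' \<longrightarrow> h \<in> Trans Th A'' B'' \<longrightarrow>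
      pr Th (pr Th f g) h = pr Th f (pr Th g h)) \<and>
   (\<forall>A B f. f \<in> Trans Th A B \<longrightarrow> pr Th f (idt Th (unitS Th)) = f \<and> pr Th (idt Th (unitS Th)) f = f) \<and>
   \<comment> \<open>symmetry up to a reversible swap (natural)\<close>
   (\<forall>A B. channel Th (cmp Th A B) (cmp Th B A) (swp Th A B) \<and>
      sq Th (swp Th B A) (swp Th A B) = idt Th (cmp Th A B)) \<and>
   (\<forall>A B A' B' f g. f \<in> Trans Th A B \<longrightarrow> g \<in> Trans Th A' B' \<longrightarrow>
      sq Th (swp Th B B') (pr Th f g) = sq Th (pr Th g f) (swp Th A A')) \<and>
   \<comment> \<open>linearity: composition is bilinear\<close>
   bilinear (sq Th) \<and> bilinear (pr Th) \<and>
   \<comment> \<open>closure of tests: parallel composition, conditioning (includes sequential composition), coarse-graining (includes relabelling)\<close>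
   (\<forall>A B A' B' t u. t \<in> Tests Th A B \<longrightarrow> u \<in> Tests Th A' B' \<longrightarrow>
      concat (map (\<lambda>f. map (\<lambda>g. pr Th f g) u) t) \<in> Tests Th (cmp Th A A') (cmp Th B B')) \<and>
   (\<forall>A B C t u. t \<in> Tests Th A B \<longrightarrow> (\<forall>i<length t. u i \<in> Tests Th B C) \<longrightarrow>
      concat (map (\<lambda>i. map (\<lambda>g. sq Th g (t ! i)) (u i)) [0..<length t]) \<in> Tests Th A C) \<and>
   (\<forall>A B t (f::nat \<Rightarrow> nat) m. t \<in> Tests Th A B \<longrightarrow> (\<forall>i<length t. f i < m) \<longrightarrow>
      (\<forall>j<m. \<exists>i<length t. f i = j) \<longrightarrow>
      map (\<lambda>j. \<Sum>i\<in>{i. i < length t \<and> f i = j}. t ! i) [0..<m] \<in> Tests Th A B) \<and>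
   \<comment> \<open>transformations I -> I are probabilities; those of a test sum to 1\<close>
   Trans Th (unitS Th) (unitS Th) \<subseteq> {p *\<^sub>R idt Th (unitS Th) | p. 0 \<le> p \<and> p \<le> 1} \<and>
   idt Th (unitS Th) \<noteq> 0 \<and>
   (\<forall>t \<in> Tests Th (unitS Th) (unitS Th). sum_list t = idt Th (unitS Th)) \<and>
   \<comment> \<open>identification of states, effects and transformations (also on real spans)\<close>
   (\<forall>A x y. x \<in> span (States Th A) \<longrightarrow> y \<in> span (States Th A) \<longrightarrow>
      (\<forall>a \<in> Effects Th A. sq Th a x = sq Th a y) \<longrightarrow> x = y) \<and>
   (\<forall>A x y. x \<in> span (Effects Th A) \<longrightarrow> y \<in> span (Effects Th A) \<longrightarrow>
      (\<forall>\<rho> \<in> States Th A. sq Th x \<rho> = sq Th y \<rho>) \<longrightarrow> x = y) \<and>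
   (\<forall>A B x y. x \<in> span (Trans Th A B) \<longrightarrow> y \<in> span (Trans Th A B) \<longrightarrow>
      (\<forall>S. \<forall>\<rho> \<in> States Th (cmp Th A S).
          sq Th (pr Th x (idt Th S)) \<rho> = sq Th (pr Th y (idt Th S)) \<rho>) \<longrightarrow> x = y) \<and>
   \<comment> \<open>finite dimensionality of the state spaces\<close>
   (\<forall>A. \<exists>F. finite F \<and> span (States Th A) \<subseteq> span F) \<and>
   \<comment> \<open>(i) causality\<close>
   (\<forall>A. [eff Th A] \<in> Tests Th A (unitS Th) \<and>
        (\<forall>a. [a] \<in> Tests Th A (unitS Th) \<longrightarrow> a = eff Th A)) \<and>
   (\<forall>A B. eff Th (cmp Th A B) = pr Th (eff Th A) (eff Th B)) \<and>
   \<comment> \<open>(ii) local discriminability\<close>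
   (\<forall>A B \<rho> \<sigma>. \<rho> \<in> States Th (cmp Th A B) \<longrightarrow> \<sigma> \<in> States Th (cmp Th A B) \<longrightarrow> \<rho> \<noteq> \<sigma> \<longrightarrow>
      (\<exists>a \<in> Effects Th A. \<exists>b \<in> Effects Th B. sq Th (pr Th a b) \<rho> \<noteq> sq Th (pr Th a b) \<sigma>)) \<and>
   \<comment> \<open>(iii) closedness, non-determinism, convexity, perfectly distinguishable states\<close>
   (\<forall>A. closed (States Th A)) \<and>
   (\<exists>p \<in> Trans Th (unitS Th) (unitS Th). p \<noteq> 0 \<and> p \<noteq> idt Th (unitS Th)) \<and>
   (\<forall>A B. convex (Trans Th A B)) \<and>
   (\<exists>A \<rho>0 \<rho>1 a0 a1. \<rho>0 \<in> States1 Th A \<and> \<rho>1 \<in> States1 Th A \<and> [a0, a1] \<in> Tests Th A (unitS Th) \<and>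
      sq Th a0 \<rho>0 = idt Th (unitS Th) \<and> sq Th a1 \<rho>1 = idt Th (unitS Th) \<and>
      sq Th a0 \<rho>1 = 0 \<and> sq Th a1 \<rho>0 = 0)"

definition purification_postulate :: "('s, 't::real_vector) opt \<Rightarrow> bool" where
  "purification_postulate Th \<longleftrightarrow>
   (\<forall>A. \<forall>\<rho> \<in> States1 Th A. \<exists>B \<Psi>. pure Th (cmp Th A B) \<Psi> \<and> \<Psi> \<in> States1 Th (cmp Th A B) \<and>
        marginal Th A B \<Psi> = \<rho>) \<and>
   (\<forall>A B \<Psi> \<Psi>'. \<Psi> \<in> States1 Th (cmp Th A B) \<longrightarrow> \<Psi>' \<in> States1 Th (cmp Th A B) \<longrightarrow>
        pure Th (cmp Th A B) \<Psi> \<longrightarrow> pure Th (cmp Th A B) \<Psi>' \<longrightarrow>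
        marginal Th A B \<Psi> = marginal Th A B \<Psi>' \<longrightarrow>
        (\<exists>U \<in> RevGroup Th B. \<Psi>' = sq Th (pr Th (idt Th A) U) \<Psi>))"

end

theory Submission
  imports Defs
begin

locale optfw =
  fixes Th :: "('s, 't::real_normed_vector) opt"
  assumes fw: "opt_framework Th"
begin

lemmas fwc = fw[unfolded opt_framework_def]

abbreviation "Tr \<equiv> Trans Th"
abbreviation "Ts \<equiv> Tests Th"
abbreviation "sc \<equiv> sq Th"
abbreviation "pa \<equiv> pr Th"
abbreviation "ii \<equiv> idt Th"
abbreviation "ee \<equiv> eff Th"
abbreviation "cm \<equiv> cmp Th"
abbreviation "uI \<equiv> unitS Th"
abbreviation "sw \<equiv> swp Th"

lemma assoc[simp]: "cm (cm A B) C = cm A (cm B C)"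
  using fwc[THEN conjunct1] by blast
lemma unitR[simp]: "cm A uI = A"
  using fwc[THEN conjunct2, THEN conjunct1] by blast
lemma unitL[simp]: "cm uI A = A"
  using fwc[THEN conjunct2, THEN conjunct2, THEN conjunct1] by blast
lemma test_ne: "t \<in> Ts A B \<Longrightarrow> t \<noteq> []"
  using fwc[THEN conjunct2, THEN conjunct2, THEN conjunct2, THEN conjunct1] by blast
lemma test_sub: "t \<in> Ts A B \<Longrightarrow> set t \<subseteq> Tr A B"
  using fwc[THEN conjunct2, THEN conjunct2, THEN conjunct2, THEN conjunct1] by blast
lemma test_mem: "t \<in> Ts A B \<Longrightarrow> x \<in> set t \<Longrightarrow> x \<in> Tr A B"
  using test_sub by blast
lemma test_nth: "t \<in> Ts A B \<Longrightarrow> i < length t \<Longrightarrow> t ! i \<in> Tr A B"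
  using test_sub nth_mem by blast
lemma tr_tests: "Tr A B = (\<Union>t\<in>Ts A B. set t)"
  using fwc[THEN conjunct2, THEN conjunct2, THEN conjunct2, THEN conjunct2, THEN conjunct1] by blast
lemma tr_in_test: "x \<in> Tr A B \<Longrightarrow> \<exists>t\<in>Ts A B. \<exists>i<length t. t ! i = x"
  using tr_tests by (auto simp: in_set_conv_nth)
lemma id_test: "[ii A] \<in> Ts A A"
  using fwc[THEN conjunct2, THEN conjunct2, THEN conjunct2, THEN conjunct2, THEN conjunct2, THEN conjunct1] by blast
lemma id_tr: "ii A \<in> Tr A A"
  using id_test test_mem by fastforce
lemma sq_tr: "f \<in> Tr A B \<Longrightarrow> g \<in> Tr B C \<Longrightarrow> sc g f \<in> Tr A C"
  using fwc[THEN conjunct2, THEN conjunct2, THEN conjunct2, THEN conjunct2, THEN conjunct2, THEN conjunct2, THEN conjunct1] by blast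
lemma sq_idl[simp]: "f \<in> Tr A B \<Longrightarrow> sc (ii B) f = f"
  using fwc[THEN conjunct2, THEN conjunct2, THEN conjunct2, THEN conjunct2, THEN conjunct2, THEN conjunct2, THEN conjunct2, THEN conjunct1] by blast
lemma sq_idr[simp]: "f \<in> Tr A B \<Longrightarrow> sc f (ii A) = f"
  using fwc[THEN conjunct2, THEN conjunct2, THEN conjunct2, THEN conjunct2, THEN conjunct2, THEN conjunct2, THEN conjunct2, THEN conjunct1] by blast
lemma sq_assoc: "f \<in> Tr A B \<Longrightarrow> g \<in> Tr B C \<Longrightarrow> h \<in> Tr C D \<Longrightarrow> sc h (sc g f) = sc (sc h g) f"
  using fwc[THEN conjunct2, THEN conjunct2, THEN conjunct2, THEN conjunct2, THEN conjunct2, THEN conjunct2, THEN conjunct2, THEN conjunct2, THEN conjunct1] by blast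
lemma pr_tr: "f \<in> Tr A B \<Longrightarrow> g \<in> Tr A' B' \<Longrightarrow> pa f g \<in> Tr (cm A A') (cm B B')"
  using fwc[THEN conjunct2, THEN conjunct2, THEN conjunct2, THEN conjunct2, THEN conjunct2, THEN conjunct2, THEN conjunct2, THEN conjunct2, THEN conjunct2, THEN conjunct1] by blast
lemma id_cmp: "ii (cm A B) = pa (ii A) (ii B)"
  using fwc[THEN conjunct2, THEN conjunct2, THEN conjunct2, THEN conjunct2, THEN conjunct2, THEN conjunct2, THEN conjunct2, THEN conjunct2, THEN conjunct2, THEN conjunct2, THEN conjunct1] by blast
lemma interchange: "f \<in> Tr A B \<Longrightarrow> g \<in> Tr B C \<Longrightarrow> f' \<in> Tr A' B' \<Longrightarrow> g' \<in> Tr B' C' \<Longrightarrow>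
      sc (pa g g') (pa f f') = pa (sc g f) (sc g' f')"
  using fwc[THEN conjunct2, THEN conjunct2, THEN conjunct2, THEN conjunct2, THEN conjunct2, THEN conjunct2, THEN conjunct2, THEN conjunct2, THEN conjunct2, THEN conjunct2, THEN conjunct2, THEN conjunct1] by blast
lemma pr_assoc: "f \<in> Tr A B \<Longrightarrow> g \<in> Tr A' B' \<Longrightarrow> h \<in> Tr A'' B'' \<Longrightarrow>
      pa (pa f g) h = pa f (pa g h)"
  using fwc[THEN conjunct2, THEN conjunct2, THEN conjunct2, THEN conjunct2, THEN conjunct2, THEN conjunct2, THEN conjunct2, THEN conjunct2, THEN conjunct2, THEN conjunct2, THEN conjunct2, THEN conjunct2, THEN conjunct1] by blast
lemma pr_unitR[simp]: "f \<in> Tr A B \<Longrightarrow> pa f (ii uI) = f"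
  using fwc[THEN conjunct2, THEN conjunct2, THEN conjunct2, THEN conjunct2, THEN conjunct2, THEN conjunct2, THEN conjunct2, THEN conjunct2, THEN conjunct2, THEN conjunct2, THEN conjunct2, THEN conjunct2, THEN conjunct2, THEN conjunct1] by blast
lemma pr_unitL[simp]: "f \<in> Tr A B \<Longrightarrow> pa (ii uI) f = f"
  using fwc[THEN conjunct2, THEN conjunct2, THEN conjunct2, THEN conjunct2, THEN conjunct2, THEN conjunct2, THEN conjunct2, THEN conjunct2, THEN conjunct2, THEN conjunct2, THEN conjunct2, THEN conjunct2, THEN conjunct2, THEN conjunct1] by blast
lemma swap_ch: "channel Th (cm A B) (cm B A) (sw A B)"
  using fwc[THEN conjunct2, THEN conjunct2, THEN conjunct2, THEN conjunct2, THEN conjunct2, THEN conjunct2, THEN conjunct2, THEN conjunct2, THEN conjunct2, THEN conjunct2, THEN conjunct2, THEN conjunct2, THEN conjunct2, THEN conjunct2, THEN conjunct1] by blast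
lemma swap_inv: "sc (sw B A) (sw A B) = ii (cm A B)"
  using fwc[THEN conjunct2, THEN conjunct2, THEN conjunct2, THEN conjunct2, THEN conjunct2, THEN conjunct2, THEN conjunct2, THEN conjunct2, THEN conjunct2, THEN conjunct2, THEN conjunct2, THEN conjunct2, THEN conjunct2, THEN conjunct2, THEN conjunct1] by blast
lemma swap_nat: "f \<in> Tr A B \<Longrightarrow> g \<in> Tr A' B' \<Longrightarrow>
      sc (sw B B') (pa f g) = sc (pa g f) (sw A A')"
  using fwc[THEN conjunct2, THEN conjunct2, THEN conjunct2, THEN conjunct2, THEN conjunct2, THEN conjunct2, THEN conjunct2, THEN conjunct2, THEN conjunct2, THEN conjunct2, THEN conjunct2, THEN conjunct2, THEN conjunct2, THEN conjunct2, THEN conjunct2, THEN conjunct1] by blast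
lemma bil_sq: "bilinear sc"
  using fwc[THEN conjunct2, THEN conjunct2, THEN conjunct2, THEN conjunct2, THEN conjunct2, THEN conjunct2, THEN conjunct2, THEN conjunct2, THEN conjunct2, THEN conjunct2, THEN conjunct2, THEN conjunct2, THEN conjunct2, THEN conjunct2, THEN conjunct2, THEN conjunct2, THEN conjunct1] by blast
lemma bil_pr: "bilinear pa"
  using fwc[THEN conjunct2, THEN conjunct2, THEN conjunct2, THEN conjunct2, THEN conjunct2, THEN conjunct2, THEN conjunct2, THEN conjunct2, THEN conjunct2, THEN conjunct2, THEN conjunct2, THEN conjunct2, THEN conjunct2, THEN conjunct2, THEN conjunct2, THEN conjunct2, THEN conjunct2, THEN conjunct1] by blast
lemma test_par: "t \<in> Ts A B \<Longrightarrow> u \<in> Ts A' B' \<Longrightarrow>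
      concat (map (\<lambda>f. map (\<lambda>g. pa f g) u) t) \<in> Ts (cm A A') (cm B B')"
  using fwc[THEN conjunct2, THEN conjunct2, THEN conjunct2, THEN conjunct2, THEN conjunct2, THEN conjunct2, THEN conjunct2, THEN conjunct2, THEN conjunct2, THEN conjunct2, THEN conjunct2, THEN conjunct2, THEN conjunct2, THEN conjunct2, THEN conjunct2, THEN conjunct2, THEN conjunct2, THEN conjunct2, THEN conjunct1] by blast
lemma test_cond: "t \<in> Ts A B \<Longrightarrow> (\<And>i. i<length t \<Longrightarrow> u i \<in> Ts B C) \<Longrightarrow>
      concat (map (\<lambda>i. map (\<lambda>g. sc g (t ! i)) (u i)) [0..<length t]) \<in> Ts A C"
  using fwc[THEN conjunct2, THEN conjunct2, THEN conjunct2, THEN conjunct2, THEN conjunct2, THEN conjunct2, THEN conjunct2, THEN conjunct2, THEN conjunct2, THEN conjunct2, THEN conjunct2, THEN conjunct2, THEN conjunct2, THEN conjunct2, THEN conjunct2, THEN conjunct2, THEN conjunct2, THEN conjunct2, THEN conjunct2, THEN conjunct1] by blast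
lemma test_coarse: "t \<in> Ts A B \<Longrightarrow> (\<And>i. i<length t \<Longrightarrow> f i < m) \<Longrightarrow>
      (\<And>j. j<m \<Longrightarrow> \<exists>i<length t. f i = j) \<Longrightarrow>
      map (\<lambda>j. \<Sum>i\<in>{i. i < length t \<and> f i = j}. t ! i) [0..<m] \<in> Ts A B"
  using fwc[THEN conjunct2, THEN conjunct2, THEN conjunct2, THEN conjunct2, THEN conjunct2, THEN conjunct2, THEN conjunct2, THEN conjunct2, THEN conjunct2, THEN conjunct2, THEN conjunct2, THEN conjunct2, THEN conjunct2, THEN conjunct2, THEN conjunct2, THEN conjunct2, THEN conjunct2, THEN conjunct2, THEN conjunct2, THEN conjunct2, THEN conjunct1] by blast
lemma prob_I: "x \<in> Tr uI uI \<Longrightarrow> \<exists>p. x = p *\<^sub>R ii uI \<and> 0 \<le> p \<and> p \<le> 1"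
  using fwc[THEN conjunct2, THEN conjunct2, THEN conjunct2, THEN conjunct2, THEN conjunct2, THEN conjunct2, THEN conjunct2, THEN conjunct2, THEN conjunct2, THEN conjunct2, THEN conjunct2, THEN conjunct2, THEN conjunct2, THEN conjunct2, THEN conjunct2, THEN conjunct2, THEN conjunct2, THEN conjunct2, THEN conjunct2, THEN conjunct2, THEN conjunct2, THEN conjunct1] by blast
lemma idI_ne0: "ii uI \<noteq> 0"
  using fwc[THEN conjunct2, THEN conjunct2, THEN conjunct2, THEN conjunct2, THEN conjunct2, THEN conjunct2, THEN conjunct2, THEN conjunct2, THEN conjunct2, THEN conjunct2, THEN conjunct2, THEN conjunct2, THEN conjunct2, THEN conjunct2, THEN conjunct2, THEN conjunct2, THEN conjunct2, THEN conjunct2, THEN conjunct2, THEN conjunct2, THEN conjunct2, THEN conjunct2, THEN conjunct1] by blast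
lemma test_I_sum: "t \<in> Ts uI uI \<Longrightarrow> sum_list t = ii uI"
  using fwc[THEN conjunct2, THEN conjunct2, THEN conjunct2, THEN conjunct2, THEN conjunct2, THEN conjunct2, THEN conjunct2, THEN conjunct2, THEN conjunct2, THEN conjunct2, THEN conjunct2, THEN conjunct2, THEN conjunct2, THEN conjunct2, THEN conjunct2, THEN conjunct2, THEN conjunct2, THEN conjunct2, THEN conjunct2, THEN conjunct2, THEN conjunct2, THEN conjunct2, THEN conjunct2, THEN conjunct1] by blast
lemma ident_state: "x \<in> span (States Th A) \<Longrightarrow> y \<in> span (States Th A) \<Longrightarrow>
      (\<And>a. a \<in> Effects Th A \<Longrightarrow> sc a x = sc a y) \<Longrightarrow> x = y"
  using fwc[THEN conjunct2, THEN conjunct2, THEN conjunct2, THEN conjunct2, THEN conjunct2, THEN conjunct2, THEN conjunct2, THEN conjunct2, THEN conjunct2, THEN conjunct2, THEN conjunct2, THEN conjunct2, THEN conjunct2, THEN conjunct2, THEN conjunct2, THEN conjunct2, THEN conjunct2, THEN conjunct2, THEN conjunct2, THEN conjunct2, THEN conjunct2, THEN conjunct2, THEN conjunct2, THEN conjunct2, THEN conjunct1] by blast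
lemma ident_eff: "x \<in> span (Effects Th A) \<Longrightarrow> y \<in> span (Effects Th A) \<Longrightarrow>
      (\<And>\<rho>. \<rho> \<in> States Th A \<Longrightarrow> sc x \<rho> = sc y \<rho>) \<Longrightarrow> x = y"
  using fwc[THEN conjunct2, THEN conjunct2, THEN conjunct2, THEN conjunct2, THEN conjunct2, THEN conjunct2, THEN conjunct2, THEN conjunct2, THEN conjunct2, THEN conjunct2, THEN conjunct2, THEN conjunct2, THEN conjunct2, THEN conjunct2, THEN conjunct2, THEN conjunct2, THEN conjunct2, THEN conjunct2, THEN conjunct2, THEN conjunct2, THEN conjunct2, THEN conjunct2, THEN conjunct2, THEN conjunct2, THEN conjunct2, THEN conjunct1] by blast
lemma ident_trans: "x \<in> span (Tr A B) \<Longrightarrow> y \<in> span (Tr A B) \<Longrightarrow>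
      (\<And>S \<rho>. \<rho> \<in> States Th (cm A S) \<Longrightarrow> sc (pa x (ii S)) \<rho> = sc (pa y (ii S)) \<rho>) \<Longrightarrow> x = y"
  using fwc[THEN conjunct2, THEN conjunct2, THEN conjunct2, THEN conjunct2, THEN conjunct2, THEN conjunct2, THEN conjunct2, THEN conjunct2, THEN conjunct2, THEN conjunct2, THEN conjunct2, THEN conjunct2, THEN conjunct2, THEN conjunct2, THEN conjunct2, THEN conjunct2, THEN conjunct2, THEN conjunct2, THEN conjunct2, THEN conjunct2, THEN conjunct2, THEN conjunct2, THEN conjunct2, THEN conjunct2, THEN conjunct2, THEN conjunct2, THEN conjunct1] by blast
lemma caus1: "[ee A] \<in> Ts A uI"
  using fwc[THEN conjunct2, THEN conjunct2, THEN conjunct2, THEN conjunct2, THEN conjunct2, THEN conjunct2, THEN conjunct2, THEN conjunct2, THEN conjunct2, THEN conjunct2, THEN conjunct2, THEN conjunct2, THEN conjunct2, THEN conjunct2, THEN conjunct2, THEN conjunct2, THEN conjunct2, THEN conjunct2, THEN conjunct2, THEN conjunct2, THEN conjunct2, THEN conjunct2, THEN conjunct2, THEN conjunct2, THEN conjunct2, THEN conjunct2, THEN conjunct2, THEN conjunct2, THEN conjunct1] by blast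
lemma caus2: "[a] \<in> Ts A uI \<Longrightarrow> a = ee A"
  using fwc[THEN conjunct2, THEN conjunct2, THEN conjunct2, THEN conjunct2, THEN conjunct2, THEN conjunct2, THEN conjunct2, THEN conjunct2, THEN conjunct2, THEN conjunct2, THEN conjunct2, THEN conjunct2, THEN conjunct2, THEN conjunct2, THEN conjunct2, THEN conjunct2, THEN conjunct2, THEN conjunct2, THEN conjunct2, THEN conjunct2, THEN conjunct2, THEN conjunct2, THEN conjunct2, THEN conjunct2, THEN conjunct2, THEN conjunct2, THEN conjunct2, THEN conjunct2, THEN conjunct1] by blast
lemma eff_cmp: "ee (cm A B) = pa (ee A) (ee B)"
  using fwc[THEN conjunct2, THEN conjunct2, THEN conjunct2, THEN conjunct2, THEN conjunct2, THEN conjunct2, THEN conjunct2, THEN conjunct2, THEN conjunct2, THEN conjunct2, THEN conjunct2, THEN conjunct2, THEN conjunct2, THEN conjunct2, THEN conjunct2, THEN conjunct2, THEN conjunct2, THEN conjunct2, THEN conjunct2, THEN conjunct2, THEN conjunct2, THEN conjunct2, THEN conjunct2, THEN conjunct2, THEN conjunct2, THEN conjunct2, THEN conjunct2, THEN conjunct2, THEN conjunct2, THEN conjunct1] by blast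
lemma locdisc: "\<rho> \<in> States Th (cm A B) \<Longrightarrow> \<sigma> \<in> States Th (cm A B) \<Longrightarrow>
   (\<And>a b. a \<in> Effects Th A \<Longrightarrow> b \<in> Effects Th B \<Longrightarrow> sc (pa a b) \<rho> = sc (pa a b) \<sigma>) \<Longrightarrow> \<rho> = \<sigma>"
  using fwc[THEN conjunct2, THEN conjunct2, THEN conjunct2, THEN conjunct2, THEN conjunct2, THEN conjunct2, THEN conjunct2, THEN conjunct2, THEN conjunct2, THEN conjunct2, THEN conjunct2, THEN conjunct2, THEN conjunct2, THEN conjunct2, THEN conjunct2, THEN conjunct2, THEN conjunct2, THEN conjunct2, THEN conjunct2, THEN conjunct2, THEN conjunct2, THEN conjunct2, THEN conjunct2, THEN conjunct2, THEN conjunct2, THEN conjunct2, THEN conjunct2, THEN conjunct2, THEN conjunct2, THEN conjunct2, THEN conjunct1] by blast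
lemma closed_st: "closed (States Th A)"
  using fwc[THEN conjunct2, THEN conjunct2, THEN conjunct2, THEN conjunct2, THEN conjunct2, THEN conjunct2, THEN conjunct2, THEN conjunct2, THEN conjunct2, THEN conjunct2, THEN conjunct2, THEN conjunct2, THEN conjunct2, THEN conjunct2, THEN conjunct2, THEN conjunct2, THEN conjunct2, THEN conjunct2, THEN conjunct2, THEN conjunct2, THEN conjunct2, THEN conjunct2, THEN conjunct2, THEN conjunct2, THEN conjunct2, THEN conjunct2, THEN conjunct2, THEN conjunct2, THEN conjunct2, THEN conjunct2, THEN conjunct2, THEN conjunct1] by blast
lemma convex_tr: "convex (Tr A B)"
  using fwc[THEN conjunct2, THEN conjunct2, THEN conjunct2, THEN conjunct2, THEN conjunct2, THEN conjunct2, THEN conjunct2, THEN conjunct2, THEN conjunct2, THEN conjunct2, THEN conjunct2, THEN conjunct2, THEN conjunct2, THEN conjunct2, THEN conjunct2, THEN conjunct2, THEN conjunct2, THEN conjunct2, THEN conjunct2, THEN conjunct2, THEN conjunct2, THEN conjunct2, THEN conjunct2, THEN conjunct2, THEN conjunct2, THEN conjunct2, THEN conjunct2, THEN conjunct2, THEN conjunct2, THEN conjunct2, THEN conjunct2, THEN conjunct2, THEN conjunct2, THEN conjunct1] by blast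
lemma distpair: "\<exists>A \<rho>0 \<rho>1 a0 a1. \<rho>0 \<in> States1 Th A \<and> \<rho>1 \<in> States1 Th A \<and> [a0, a1] \<in> Ts A uI \<and>
      sc a0 \<rho>0 = ii uI \<and> sc a1 \<rho>1 = ii uI \<and> sc a0 \<rho>1 = 0 \<and> sc a1 \<rho>0 = 0"
  using fwc[THEN conjunct2, THEN conjunct2, THEN conjunct2, THEN conjunct2, THEN conjunct2, THEN conjunct2, THEN conjunct2, THEN conjunct2, THEN conjunct2, THEN conjunct2, THEN conjunct2, THEN conjunct2, THEN conjunct2, THEN conjunct2, THEN conjunct2, THEN conjunct2, THEN conjunct2, THEN conjunct2, THEN conjunct2, THEN conjunct2, THEN conjunct2, THEN conjunct2, THEN conjunct2, THEN conjunct2, THEN conjunct2, THEN conjunct2, THEN conjunct2, THEN conjunct2, THEN conjunct2, THEN conjunct2, THEN conjunct2, THEN conjunct2, THEN conjunct2, THEN conjunct2] by blast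

end


context optfw begin

lemma sc0l[simp]: "sc 0 x = 0" using bilinear_lzero[OF bil_sq] .
lemma sc0r[simp]: "sc x 0 = 0" using bilinear_rzero[OF bil_sq] .
lemma pa0l[simp]: "pa 0 x = 0" using bilinear_lzero[OF bil_pr] .
lemma pa0r[simp]: "pa x 0 = 0" using bilinear_rzero[OF bil_pr] .
lemma sc_addl: "sc (x + y) z = sc x z + sc y z" using bilinear_ladd[OF bil_sq] .
lemma sc_addr: "sc z (x + y) = sc z x + sc z y" using bilinear_radd[OF bil_sq] .
lemma pa_addl: "pa (x + y) z = pa x z + pa y z" using bilinear_ladd[OF bil_pr] .
lemma pa_addr: "pa z (x + y) = pa z x + pa z y" using bilinear_radd[OF bil_pr] .
lemma sc_subl: "sc (x - y) z = sc x z - sc y z" using bilinear_lsub[OF bil_sq] .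
lemma sc_subr: "sc z (x - y) = sc z x - sc z y" using bilinear_rsub[OF bil_sq] .
lemma sc_scl[simp]: "sc (c *\<^sub>R x) y = c *\<^sub>R sc x y" using bilinear_lmul[OF bil_sq] .
lemma sc_scr[simp]: "sc x (c *\<^sub>R y) = c *\<^sub>R sc x y" using bilinear_rmul[OF bil_sq] .
lemma pa_scl[simp]: "pa (c *\<^sub>R x) y = c *\<^sub>R pa x y" using bilinear_lmul[OF bil_pr] .
lemma pa_scr[simp]: "pa x (c *\<^sub>R y) = c *\<^sub>R pa x y" using bilinear_rmul[OF bil_pr] .

lemma sc_suml: "sc (sum f K) y = (\<Sum>i\<in>K. sc (f i) y)"
  by (induction K rule: infinite_finite_induct) (auto simp: sc_addl)
lemma sc_sumr: "sc y (sum f K) = (\<Sum>i\<in>K. sc y (f i))"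
  by (induction K rule: infinite_finite_induct) (auto simp: sc_addr)
lemma pa_suml: "pa (sum f K) y = (\<Sum>i\<in>K. pa (f i) y)"
  by (induction K rule: infinite_finite_induct) (auto simp: pa_addl)
lemma pa_sumr: "pa y (sum f K) = (\<Sum>i\<in>K. pa y (f i))"
  by (induction K rule: infinite_finite_induct) (auto simp: pa_addr)
lemma sc_sumlistl: "sc (sum_list xs) y = sum_list (map (\<lambda>x. sc x y) xs)"
  by (induction xs) (auto simp: sc_addl)
lemma sc_sumlistr: "sc y (sum_list xs) = sum_list (map (sc y) xs)"
  by (induction xs) (auto simp: sc_addr)

lemma concat_single: "concat (map (\<lambda>x. [f x]) xs) = map f xs"
  by (induction xs) auto

lemma map_upt_nth: "map (\<lambda>i. f (t ! i)) [0..<length t] = map f t"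
  by (rule nth_equalityI) auto

lemma cond_single: "[x] \<in> Ts A B \<Longrightarrow> u \<in> Ts B C \<Longrightarrow> map (\<lambda>g. sc g x) u \<in> Ts A C"
  using test_cond[of "[x]" A B "\<lambda>i. u" C] by simp

lemma cond_idx: "t \<in> Ts A B \<Longrightarrow> (\<And>i. i<length t \<Longrightarrow> [y i] \<in> Ts B C) \<Longrightarrow>
   map (\<lambda>i. sc (y i) (t ! i)) [0..<length t] \<in> Ts A C"
  using test_cond[of t A B "\<lambda>i. [y i]" C] by (simp add: concat_single)

lemma cond_map: "t \<in> Ts A B \<Longrightarrow> [y] \<in> Ts B C \<Longrightarrow> map (sc y) t \<in> Ts A C"
  using cond_idx[of t A B "\<lambda>i. y" C] by (simp add: map_upt_nth)

lemma par_r: "t \<in> Ts A B \<Longrightarrow> [g] \<in> Ts A' B' \<Longrightarrow> map (\<lambda>f. pa f g) t \<in> Ts (cm A A') (cm B B')"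
  using test_par[of t A B "[g]" A' B'] by (simp add: concat_single)

lemma par_l: "[f] \<in> Ts A B \<Longrightarrow> u \<in> Ts A' B' \<Longrightarrow> map (pa f) u \<in> Ts (cm A A') (cm B B')"
  using test_par[of "[f]" A B u A' B'] by simp

lemma par_single: "[f] \<in> Ts A B \<Longrightarrow> [g] \<in> Ts A' B' \<Longrightarrow> [pa f g] \<in> Ts (cm A A') (cm B B')"
  using par_l[of f A B "[g]"] by simp

lemma sq_single: "[f] \<in> Ts A B \<Longrightarrow> [g] \<in> Ts B C \<Longrightarrow> [sc g f] \<in> Ts A C"
  using cond_map[of "[f]" A B g C] by simp

lemma coarse_all: "t \<in> Ts A B \<Longrightarrow> [sum_list t] \<in> Ts A B"
proof -
  assume t: "t \<in> Ts A B"
  have ne: "length t > 0" using test_ne[OF t] by simp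
  have "map (\<lambda>j. \<Sum>i\<in>{i. i < length t \<and> (0::nat) = j}. t ! i) [0..<1] \<in> Ts A B"
    using test_coarse[of t A B "\<lambda>_. 0" 1] t ne by auto
  moreover have "{i. i < length t \<and> (0::nat) = 0} = {0..<length t}" by auto
  ultimately show ?thesis by (simp add: sum_list_sum_nth)
qed

lemma coarse2: assumes t: "t \<in> Ts A B" and Y: "Y0 \<subseteq> {..<length t}" "Y0 \<noteq> {}" "Y0 \<noteq> {..<length t}"
  shows "[\<Sum>i\<in>Y0. t ! i, \<Sum>i\<in>{..<length t} - Y0. t ! i] \<in> Ts A B"
proof -
  define f where "f i = (if i \<in> Y0 then 0 else (1::nat))" for i
  have "map (\<lambda>j. \<Sum>i\<in>{i. i < length t \<and> f i = j}. t ! i) [0..<2] \<in> Ts A B"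
  proof (rule test_coarse[OF t])
    show "\<And>i. i < length t \<Longrightarrow> f i < 2" by (simp add: f_def)
    show "\<And>j. j < 2 \<Longrightarrow> \<exists>i<length t. f i = j"
    proof -
      fix j :: nat assume "j < 2"
      then consider "j = 0" | "j = 1" by linarith
      then show "\<exists>i<length t. f i = j"
      proof cases
        case 1 then show ?thesis using Y by (auto simp: f_def)
      next
        case 2
        obtain i where "i < length t" "i \<notin> Y0" using Y by auto
        then show ?thesis using 2 by (auto simp: f_def)
      qed
    qed
  qed
  moreover have "{i. i < length t \<and> f i = 0} = Y0" using Y by (auto simp: f_def)
  moreover have "{i. i < length t \<and> f i = 1} = {..<length t} - Y0" by (auto simp: f_def)
  ultimately show ?thesis by (simp add: upt_rec)
qed

lemma eI: "ee uI = ii uI"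
  using caus2[OF id_test] by simp

lemma test_eff_sum: "t \<in> Ts A B \<Longrightarrow> sum_list (map (sc (ee B)) t) = ee A"
proof -
  assume t: "t \<in> Ts A B"
  have "map (sc (ee B)) t \<in> Ts A uI" by (rule cond_map[OF t caus1])
  from caus2[OF coarse_all[OF this]] show ?thesis .
qed

lemma eff_tr: "ee A \<in> Tr A uI"
  using caus1 test_mem by fastforce

lemma test_sum_eff: "t \<in> Ts A uI \<Longrightarrow> sum_list t = ee A"
proof -
  assume t: "t \<in> Ts A uI"
  have "map (sc (ee uI)) t = t"
    using test_sub[OF t] by (auto simp: eI intro!: map_idI)
  then show ?thesis using test_eff_sum[OF t] by simp
qed

lemma probI: "x \<in> Tr uI uI \<Longrightarrow> \<exists>p\<ge>0. p \<le> 1 \<and> x = p *\<^sub>R ii uI"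
  using prob_I by blast

lemma nonneg_sum0:
  assumes K: "finite K" and x: "\<And>i. i\<in>K \<Longrightarrow> x i \<in> Tr uI uI" and s: "sum x K = 0" and i0: "i0 \<in> K"
  shows "x i0 = 0"
proof -
  have "\<forall>i\<in>K. \<exists>p. p \<ge> 0 \<and> x i = p *\<^sub>R ii uI" using probI x by blast
  from bchoice[OF this] obtain p where p: "\<And>i. i\<in>K \<Longrightarrow> p i \<ge> 0 \<and> x i = p i *\<^sub>R ii uI"
    by blast
  have "sum x K = (\<Sum>i\<in>K. p i) *\<^sub>R ii uI"
    by (simp add: scaleR_sum_left p)
  then have "(\<Sum>i\<in>K. p i) = 0" using s idI_ne0 by simp
  then have "p i0 = 0" using sum_nonneg_eq_0_iff[OF K] p i0 by blast
  then show ?thesis using p i0 by simp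
qed

lemma zero_span: "0 \<in> span X" by (simp add: span_zero)

lemma eff_zero:
  assumes K: "finite K" and a: "\<And>i. i\<in>K \<Longrightarrow> a i \<in> Tr A uI" and s: "sum a K = 0" and i0: "i0 \<in> K"
  shows "a i0 = 0"
proof (rule ident_eff[of _ A])
  show "a i0 \<in> span (Effects Th A)" using a i0 by (simp add: Effects_def span_base)
  show "0 \<in> span (Effects Th A)" by (rule zero_span)
  fix \<rho> assume r: "\<rho> \<in> States Th A"
  have "sc (a i0) \<rho> = 0"
  proof (rule nonneg_sum0[OF K, of "\<lambda>i. sc (a i) \<rho>"])
    show "\<And>i. i \<in> K \<Longrightarrow> sc (a i) \<rho> \<in> Tr uI uI" using a r sq_tr by (auto simp: States_def)
    show "(\<Sum>i\<in>K. sc (a i) \<rho>) = 0" using s by (simp add: sc_suml[symmetric])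
  qed (rule i0)
  then show "sc (a i0) \<rho> = sc 0 \<rho>" by simp
qed

lemma state_zero:
  assumes r: "\<rho> \<in> States Th A" and e: "sc (ee A) \<rho> = 0"
  shows "\<rho> = 0"
proof (rule ident_state[of _ A])
  show "\<rho> \<in> span (States Th A)" using r by (simp add: span_base)
  show "0 \<in> span (States Th A)" by (rule zero_span)
  fix a assume a: "a \<in> Effects Th A"
  obtain T k where T: "T \<in> Ts A uI" "k < length T" "T ! k = a"
    using tr_in_test a by (metis Effects_def)
  have "sc a \<rho> = 0"
  proof -
    have "(\<Sum>i\<in>{0..<length T}. sc (T ! i) \<rho>) = sc (sum_list T) \<rho>"
      by (simp add: sum_list_sum_nth sc_suml)
    also have "\<dots> = 0" using test_sum_eff[OF T(1)] e by simp
    finally have "(\<Sum>i\<in>{0..<length T}. sc (T ! i) \<rho>) = 0" .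
    then have "sc (T ! k) \<rho> = 0"
      using nonneg_sum0[of "{0..<length T}" "\<lambda>i. sc (T ! i) \<rho>" k] T r test_nth sq_tr
      by (auto simp: States_def)
    then show ?thesis using T by simp
  qed
  then show "sc a \<rho> = sc a 0" by simp
qed

lemma states_tr: "\<rho> \<in> States Th A \<longleftrightarrow> \<rho> \<in> Tr uI A" by (simp add: States_def)

lemma trans_zero:
  assumes X: "X \<in> Tr A B" and e: "sc (ee B) X = 0"
  shows "X = 0"
proof (rule ident_trans[of _ A B])
  show "X \<in> span (Tr A B)" using X by (simp add: span_base)
  show "0 \<in> span (Tr A B)" by (rule zero_span)
  fix S \<rho> assume r: "\<rho> \<in> States Th (cm A S)"
  have z: "sc (pa X (ii S)) \<rho> \<in> States Th (cm B S)"
    using r X pr_tr[OF X id_tr] sq_tr by (auto simp: States_def)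
  have "sc (ee (cm B S)) (sc (pa X (ii S)) \<rho>) = sc (sc (pa (ee B) (ee S)) (pa X (ii S))) \<rho>"
    using sq_assoc[of \<rho> uI "cm A S" "pa X (ii S)" "cm B S" "pa (ee B) (ee S)" "cm uI uI"]
      r X pr_tr[OF X id_tr] pr_tr[OF eff_tr eff_tr] by (simp add: eff_cmp States_def)
  also have "\<dots> = sc (pa (sc (ee B) X) (sc (ee S) (ii S))) \<rho>"
    using interchange[OF X eff_tr id_tr eff_tr] by simp
  also have "\<dots> = 0" using e by simp
  finally have "sc (pa X (ii S)) \<rho> = 0" using state_zero[OF z] by simp
  then show "sc (pa X (ii S)) \<rho> = sc (pa 0 (ii S)) \<rho>" by simp
qed

lemma zero_II: "0 \<in> Tr uI uI"
proof -
  obtain A0 \<rho>0 \<rho>1 a0 a1 where d: "\<rho>1 \<in> States1 Th A0" "[a0, a1] \<in> Ts A0 uI" "sc a0 \<rho>1 = 0"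
    using distpair by blast
  have "a0 \<in> Tr A0 uI" using d(2) test_mem by fastforce
  moreover have "\<rho>1 \<in> Tr uI A0" using d(1) by (simp add: States1_def States_def)
  ultimately show ?thesis using sq_tr d(3) by metis
qed

lemma zero_tr: "f \<in> Tr A B \<Longrightarrow> 0 \<in> Tr A B"
  using pr_tr[of f A B 0 uI uI] zero_II by simp

lemma scale_tr: "f \<in> Tr A B \<Longrightarrow> 0 \<le> c \<Longrightarrow> c \<le> 1 \<Longrightarrow> c *\<^sub>R f \<in> Tr A B"
proof -
  assume f: "f \<in> Tr A B" and c: "0 \<le> c" "c \<le> 1"
  have "(1 - c) *\<^sub>R 0 + c *\<^sub>R f \<in> Tr A B"
    using convexD_alt[OF convex_tr zero_tr[OF f] f] c by (metis add.commute diff_add_cancel le_add_diff_inverse2)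
  then show ?thesis by simp
qed

lemma sub_sum_tr: assumes t: "t \<in> Ts A B" and Y: "Y0 \<subseteq> {..<length t}"
  shows "(\<Sum>i\<in>Y0. t ! i) \<in> Tr A B"
proof -
  have ne: "t \<noteq> []" using test_ne[OF t] .
  have t0: "t ! 0 \<in> Tr A B" using test_nth[OF t] ne by simp
  consider "Y0 = {}" | "Y0 = {..<length t}" | "Y0 \<noteq> {}" "Y0 \<noteq> {..<length t}" by blast
  then show ?thesis
  proof cases
    case 1 then show ?thesis using zero_tr[OF t0] by simp
  next
    case 2 then show ?thesis using coarse_all[OF t] test_mem
      by (metis atLeast0LessThan list.set_intros(1) sum_list_sum_nth)
  next
    case 3 then show ?thesis using coarse2[OF t Y] test_mem by fastforce
  qed
qed

end


context optfw begin

lemma sum_map_nth: "sum_list (map f t) = (\<Sum>i<length t. f (t ! i))"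
  by (simp add: sum_list_sum_nth atLeast0LessThan)

lemma channel_test:
  assumes x: "x \<in> Tr A B" and e: "sc (ee B) x = ee A"
  shows "[x] \<in> Ts A B"
proof -
  obtain t k where t: "t \<in> Ts A B" "k < length t" "t ! k = x" using tr_in_test[OF x] by blast
  define n where "n = length t"
  have E: "(\<Sum>i<n. sc (ee B) (t ! i)) = ee A"
    using test_eff_sum[OF t(1)] by (simp add: sum_map_nth n_def)
  have kn: "k \<in> {..<n}" using t n_def by simp
  have "(\<Sum>i<n. sc (ee B) (t ! i)) = sc (ee B) (t ! k) + (\<Sum>i\<in>{..<n}-{k}. sc (ee B) (t ! i))"
    by (rule sum.remove[OF _ kn]) simp
  then have R: "(\<Sum>i\<in>{..<n}-{k}. sc (ee B) (t ! i)) = 0" using E t e by simp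
  have z: "t ! i = 0" if i: "i \<in> {..<n}-{k}" for i
  proof -
    have "sc (ee B) (t ! i) = 0"
      by (rule eff_zero[of "{..<n}-{k}" "\<lambda>i. sc (ee B) (t ! i)" A i])
        (use R i t n_def in \<open>auto intro: sq_tr[OF test_nth eff_tr]\<close>)
    then show ?thesis using trans_zero test_nth[OF t(1)] i n_def by auto
  qed
  have "sum_list t = (\<Sum>i<n. t ! i)" by (simp add: sum_list_sum_nth atLeast0LessThan n_def)
  also have "\<dots> = t ! k + (\<Sum>i\<in>{..<n}-{k}. t ! i)" by (rule sum.remove[OF _ kn]) simp
  also have "\<dots> = x" using z t by simp
  finally show ?thesis using coarse_all[OF t(1)] by simp
qed

lemma test_channel: "[x] \<in> Ts A B \<Longrightarrow> sc (ee B) x = ee A"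
  using test_eff_sum[of "[x]"] by simp

lemma single_tr: "[x] \<in> Ts A B \<Longrightarrow> x \<in> Tr A B"
  using test_mem by fastforce

lemma states1_test: "\<rho> \<in> States1 Th A \<Longrightarrow> [\<rho>] \<in> Ts uI A"
  by (rule channel_test) (auto simp: States1_def States_def eI)

lemma test_states1: "[\<rho>] \<in> Ts uI A \<Longrightarrow> \<rho> \<in> States1 Th A"
  using test_channel[of \<rho> uI A] single_tr[of \<rho> uI A] by (simp add: States1_def States_def eI)

lemma state_prob: "\<rho> \<in> States Th A \<Longrightarrow> \<exists>p\<ge>0. p \<le> 1 \<and> sc (ee A) \<rho> = p *\<^sub>R ii uI"
  using probI sq_tr eff_tr by (metis States_def)

lemma scaleI_inj: "p *\<^sub>R ii uI = q *\<^sub>R ii uI \<Longrightarrow> p = q"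
  using idI_ne0 by simp

lemma normalize:
  assumes r: "\<rho> \<in> States Th A" and e: "sc (ee A) \<rho> = p *\<^sub>R ii uI" and p: "p > 0"
  shows "[(1/p) *\<^sub>R \<rho>] \<in> Ts uI A"
proof -
  obtain t k where t: "t \<in> Ts uI A" "k < length t" "t ! k = \<rho>"
    using tr_in_test r by (metis States_def)
  define n where "n = length t"
  have p1: "p \<le> 1" using state_prob[OF r] e scaleI_inj by metis
  define q where "q = 1 - p"
  have E: "(\<Sum>i<n. sc (ee A) (t ! i)) = ii uI"
    using test_eff_sum[OF t(1)] by (simp add: sum_map_nth n_def eI)
  have kn: "k \<in> {..<n}" using t n_def by simp
  have "(\<Sum>i<n. sc (ee A) (t ! i)) = sc (ee A) (t ! k) + (\<Sum>i\<in>{..<n}-{k}. sc (ee A) (t ! i))"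
    by (rule sum.remove[OF _ kn]) simp
  then have R: "(\<Sum>i\<in>{..<n}-{k}. sc (ee A) (t ! i)) = q *\<^sub>R ii uI"
    using E t e by (simp add: q_def algebra_simps)
  have step: "[\<rho> + q *\<^sub>R s] \<in> Ts uI A" if s: "[s] \<in> Ts uI A" for s
  proof -
    define y where "y i = (if i = k then ii A else sc s (ee A))" for i
    have yt: "[y i] \<in> Ts A A" for i
      using id_test sq_single[OF caus1 s] by (simp add: y_def eI)
    have T: "map (\<lambda>i. sc (y i) (t ! i)) [0..<length t] \<in> Ts uI A"
      by (rule cond_idx[OF t(1)]) (use yt in auto)
    have sT: "s \<in> Tr uI A" using single_tr[OF s] .
    have "sum_list (map (\<lambda>i. sc (y i) (t ! i)) [0..<length t]) = (\<Sum>i<n. sc (y i) (t ! i))"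
      by (simp add: sum_list_sum_nth atLeast0LessThan n_def)
    also have "\<dots> = sc (y k) (t ! k) + (\<Sum>i\<in>{..<n}-{k}. sc (y i) (t ! i))"
      by (rule sum.remove[OF _ kn]) simp
    also have "(\<Sum>i\<in>{..<n}-{k}. sc (y i) (t ! i)) = (\<Sum>i\<in>{..<n}-{k}. sc s (sc (ee A) (t ! i)))"
    proof (rule sum.cong)
      fix i assume i: "i \<in> {..<n}-{k}"
      have ti: "t ! i \<in> Tr uI A" using test_nth[OF t(1)] i n_def by auto
      show "sc (y i) (t ! i) = sc s (sc (ee A) (t ! i))"
        using i sq_assoc[OF ti eff_tr sT] by (simp add: y_def)
    qed simp
    also have "\<dots> = sc s (q *\<^sub>R ii uI)" using R by (simp add: sc_sumr[symmetric])
    also have "\<dots> = q *\<^sub>R s" using sT by simp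
    also have "sc (y k) (t ! k) = \<rho>" using t r by (simp add: y_def States_def)
    finally show ?thesis using coarse_all[OF T] by simp
  qed
  define s0 where "s0 = sum_list t"
  have s0t: "[s0] \<in> Ts uI A" using coarse_all[OF t(1)] by (simp add: s0_def)
  define f where "f m = ((1 - q^m)/p) *\<^sub>R \<rho> + q^m *\<^sub>R s0" for m
  have ft: "[f m] \<in> Ts uI A" for m
  proof (induction m)
    case 0 then show ?case using s0t by (simp add: f_def)
  next
    case (Suc m)
    have "f (Suc m) = \<rho> + q *\<^sub>R f m"
    proof -
      have pn: "p \<noteq> 0" using p by simp
      have "(1 - q ^ Suc m) / p = 1 + q * ((1 - q^m)/p)"
        using pn by (simp add: field_simps q_def)
      then show ?thesis by (simp add: f_def algebra_simps)
    qed
    then show ?case using step[OF Suc] by simp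
  qed
  have qn: "norm q < 1" using p p1 by (simp add: q_def)
  have "f \<longlonglongrightarrow> ((1 - 0)/p) *\<^sub>R \<rho> + 0 *\<^sub>R s0"
    unfolding f_def using p by (intro tendsto_intros LIMSEQ_power_zero qn) auto
  then have lim: "f \<longlonglongrightarrow> (1/p) *\<^sub>R \<rho>" by simp
  have inS: "(1/p) *\<^sub>R \<rho> \<in> States Th A"
    by (rule closed_sequentially[OF closed_st _ lim]) (use ft single_tr in \<open>auto simp: States_def\<close>)
  show ?thesis
    by (rule channel_test) (use inS e p in \<open>auto simp: States_def eI\<close>)
qed

end


lemma idx_lt: "i < (n::nat) \<Longrightarrow> k < m \<Longrightarrow> i*m + k < n*m"
proof -
  assume a: "i < n" "k < m"
  have "i*m + k < Suc i * m" using a(2) by simp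
  also have "Suc i * m \<le> n * m" using a(1) by (intro mult_le_mono1) simp
  finally show ?thesis .
qed

lemma concat_nth_uniform:
  assumes "\<And>i. i < n \<Longrightarrow> length (f i) = m" "i < n" "k < m"
  shows "concat (map f [0..<n]) ! (i*m + k) = f i ! k"
  using assms
proof (induction n arbitrary: i)
  case 0 then show ?case by simp
next
  case (Suc n)
  have len: "length (concat (map f [0..<n])) = n * m"
    using Suc.prems(1) by (induction n) auto
  show ?case
  proof (cases "i < n")
    case True
    have "i*m + k < n*m" using True Suc.prems(3) by (rule idx_lt)
    then show ?thesis using Suc True by (simp add: nth_append len)
  next
    case False
    then have "i = n" using Suc.prems(2) by simp
    then show ?thesis by (simp add: nth_append len)
  qed
qed

lemma concat_len_uniform:
  assumes "\<And>i. i < n \<Longrightarrow> length (f i) = m"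
  shows "length (concat (map f [0..<n])) = n * m"
  using assms by (induction n) auto

context optfw begin

lemma refine_post:
  assumes t: "t \<in> Ts uI A" and Y: "Y0 \<subseteq> {..<length t}" and j0: "j0 \<in> Y0"
    and u: "u \<in> Ts A B" and k0: "k0 < length u"
  shows "refines Th uI B (sc (u ! k0) (t ! j0)) (\<Sum>j\<in>Y0. sc (sum_list u) (t ! j))"
proof -
  define m where "m = length u"
  define T where "T = concat (map (\<lambda>i. map (\<lambda>g. sc g (t ! i)) u) [0..<length t])"
  have T: "T \<in> Ts uI B" unfolding T_def by (rule test_cond[OF t]) (use u in auto)
  have lenT: "length T = length t * m" unfolding T_def m_def by (rule concat_len_uniform) simp
  have nthT: "T ! (i*m + k) = sc (u ! k) (t ! i)" if "i < length t" "k < m" for i k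
    unfolding T_def using that concat_nth_uniform[of "length t" "\<lambda>i. map (\<lambda>g. sc g (t ! i)) u" m i k]
    by (simp add: m_def)
  define g where "g = (\<lambda>(i,k). i*m + k)"
  define Y1 where "Y1 = g ` (Y0 \<times> {..<m})"
  have inj: "inj_on g (Y0 \<times> {..<m})"
  proof (rule inj_onI, clarsimp simp: g_def)
    fix i k i' k' assume "k < m" "k' < m" "i*m + k = i'*m + k'"
    then have "(i*m+k) div m = (i'*m+k') div m" "(i*m+k) mod m = (i'*m+k') mod m" by auto
    then show "i = i' \<and> k = k'" using \<open>k < m\<close> \<open>k' < m\<close> by simp
  qed
  have Y1sub: "Y1 \<subseteq> {..<length T}"
  proof
    fix x assume "x \<in> Y1"
    then obtain i k where ik: "i \<in> Y0" "k < m" "x = i*m + k" by (auto simp: Y1_def g_def)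
    have "i < length t" using ik Y by auto
    then have "i*m + k < length t * m" using ik(2) by (rule idx_lt)
    then show "x \<in> {..<length T}" using ik lenT by simp
  qed
  have "(\<Sum>x\<in>Y1. T ! x) = (\<Sum>p\<in>Y0 \<times> {..<m}. T ! (g p))"
    unfolding Y1_def using sum.reindex[OF inj] by (simp add: comp_def)
  also have "\<dots> = (\<Sum>p\<in>Y0 \<times> {..<m}. sc (u ! snd p) (t ! fst p))"
    by (rule sum.cong) (use Y in \<open>auto simp: g_def nthT\<close>)
  also have "\<dots> = (\<Sum>i\<in>Y0. \<Sum>k<m. sc (u ! k) (t ! i))"
    unfolding sum.cartesian_product by (rule sum.cong) auto
  also have "\<dots> = (\<Sum>j\<in>Y0. sc (sum_list u) (t ! j))"
    by (simp add: sum_list_sum_nth atLeast0LessThan sc_suml m_def)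
  finally have S: "(\<Sum>x\<in>Y1. T ! x) = (\<Sum>j\<in>Y0. sc (sum_list u) (t ! j))" .
  have mem: "sc (u ! k0) (t ! j0) \<in> (\<lambda>j. T ! j) ` Y1"
  proof
    show "j0*m + k0 \<in> Y1" using j0 k0 by (auto simp: Y1_def g_def m_def)
    have "j0 < length t" using j0 Y by auto
    then show "sc (u ! k0) (t ! j0) = T ! (j0*m + k0)" using k0 nthT by (simp add: m_def)
  qed
  show ?thesis unfolding refines_def using T Y1sub S mem by metis
qed

lemma refine_post1:
  assumes t: "t \<in> Ts uI A" and Y: "Y0 \<subseteq> {..<length t}" and j0: "j0 \<in> Y0"
    and u: "[g] \<in> Ts A B"
  shows "refines Th uI B (sc g (t ! j0)) (\<Sum>j\<in>Y0. sc g (t ! j))"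
  using refine_post[OF t Y j0 u] by simp

lemma scpa_comp:
  assumes "f \<in> Tr A A'" "g \<in> Tr A' A''" "h \<in> Tr B B'" "k \<in> Tr B' B''" "\<rho> \<in> Tr Z (cm A B)"
  shows "sc (pa g k) (sc (pa f h) \<rho>) = sc (pa (sc g f) (sc k h)) \<rho>"
proof -
  have "sc (pa g k) (sc (pa f h) \<rho>) = sc (sc (pa g k) (pa f h)) \<rho>"
    by (rule sq_assoc[OF assms(5) pr_tr[OF assms(1,3)] pr_tr[OF assms(2,4)]])
  then show ?thesis using interchange[OF assms(1-4)] by simp
qed

lemma pure_rev:
  assumes P: "pure Th (cm X Y) \<Phi>" and U: "U \<in> Tr Y Z" and W: "[W] \<in> Ts Z Y"
    and WU: "sc W U = ii Y" and UW: "sc U W = ii Z"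
  shows "pure Th (cm X Z) (sc (pa (ii X) U) \<Phi>)"
proof -
  have PhiT: "\<Phi> \<in> Tr uI (cm X Y)" using P by (simp add: pure_def States_def)
  have WT: "W \<in> Tr Z Y" using single_tr[OF W] .
  have st: "sc (pa (ii X) U) \<Phi> \<in> States Th (cm X Z)"
    using sq_tr[OF PhiT pr_tr[OF id_tr U]] by (simp add: States_def)
  have bk: "sc (pa (ii X) U) (sc (pa (ii X) W) E) = E" if EE: "E \<in> Tr uI (cm X Z)" for E
    using scpa_comp[OF id_tr id_tr WT U EE] UW EE by (simp add: id_cmp[symmetric] sq_idl[OF id_tr])
  have fwd: "sc (pa (ii X) W) (sc (pa (ii X) U) \<Phi>) = \<Phi>"
    using scpa_comp[OF id_tr id_tr U WT PhiT] WU PhiT by (simp add: id_cmp[symmetric] sq_idl[OF id_tr])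
  have "atomic Th uI (cm X Z) (sc (pa (ii X) U) \<Phi>)"
    unfolding atomic_def
  proof (intro allI impI)
    fix D assume "refines Th uI (cm X Z) D (sc (pa (ii X) U) \<Phi>)"
    then obtain t Y0 where t: "t \<in> Ts uI (cm X Z)" "Y0 \<subseteq> {..<length t}"
      "sc (pa (ii X) U) \<Phi> = (\<Sum>j\<in>Y0. t ! j)" "D \<in> (\<lambda>j. t ! j) ` Y0"
      unfolding refines_def by blast
    obtain j0 where j0: "j0 \<in> Y0" "D = t ! j0" using t(4) by blast
    have Wt: "[pa (ii X) W] \<in> Ts (cm X Z) (cm X Y)" using par_single[OF id_test W] .
    have "refines Th uI (cm X Y) (sc (pa (ii X) W) (t ! j0)) (\<Sum>j\<in>Y0. sc (pa (ii X) W) (t ! j))"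
      by (rule refine_post1[OF t(1,2) j0(1) Wt])
    moreover have "(\<Sum>j\<in>Y0. sc (pa (ii X) W) (t ! j)) = \<Phi>"
      using fwd t(3) by (simp add: sc_sumr)
    ultimately have "refines Th uI (cm X Y) (sc (pa (ii X) W) D) \<Phi>" using j0 by simp
    then obtain lam where lam: "0 \<le> lam" "lam \<le> 1" "sc (pa (ii X) W) D = lam *\<^sub>R \<Phi>"
      using P unfolding pure_def atomic_def by blast
    have DT: "D \<in> Tr uI (cm X Z)" using j0 t test_nth by auto
    have "D = sc (pa (ii X) U) (lam *\<^sub>R \<Phi>)" using bk[OF DT] lam(3) by simp
    then show "\<exists>lam. 0 \<le> lam \<and> lam \<le> 1 \<and> D = lam *\<^sub>R sc (pa (ii X) U) \<Phi>" using lam by auto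
  qed
  then show ?thesis using st by (simp add: pure_def)
qed

end


context optfw begin

lemma pa_sumlistr: "pa y (sum_list xs) = sum_list (map (pa y) xs)"
  by (induction xs) (auto simp: pa_addr)
lemma pa_sumlistl: "pa (sum_list xs) y = sum_list (map (\<lambda>x. pa x y) xs)"
  by (induction xs) (auto simp: pa_addl)

lemma prod_apply:
  assumes "\<psi> \<in> Tr uI X" "\<phi> \<in> Tr uI Y" "g \<in> Tr X X'" "h \<in> Tr Y Y'"
  shows "sc (pa g h) (pa \<psi> \<phi>) = pa (sc g \<psi>) (sc h \<phi>)"
  using interchange[OF assms(1,3,2,4)] .

lemma prod_tr: "\<psi> \<in> Tr uI X \<Longrightarrow> \<phi> \<in> Tr uI Y \<Longrightarrow> pa \<psi> \<phi> \<in> Tr uI (cm X Y)"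
  using pr_tr[of \<psi> uI X \<phi> uI Y] by simp

lemma iiI_pa: "pa (ii uI) (ii uI) = ii uI"
  using pr_unitR[OF id_tr] by simp

lemma pure_prod:
  assumes s1: "\<psi> \<in> States1 Th X" and p1: "pure Th X \<psi>"
    and s2: "\<phi> \<in> States1 Th Y" and p2: "pure Th Y \<phi>"
  shows "pure Th (cm X Y) (pa \<psi> \<phi>)"
proof -
  have psT: "\<psi> \<in> Tr uI X" and phT: "\<phi> \<in> Tr uI Y"
    using s1 s2 by (auto simp: States1_def States_def)
  have eps: "sc (ee X) \<psi> = ii uI" and eph: "sc (ee Y) \<phi> = ii uI"
    using s1 s2 by (auto simp: States1_def)
  have st: "pa \<psi> \<phi> \<in> States Th (cm X Y)" using prod_tr[OF psT phT] by (simp add: States_def)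
  have "atomic Th uI (cm X Y) (pa \<psi> \<phi>)"
    unfolding atomic_def
  proof (intro allI impI)
    fix D assume "refines Th uI (cm X Y) D (pa \<psi> \<phi>)"
    then obtain t Y0 where t: "t \<in> Ts uI (cm X Y)" "Y0 \<subseteq> {..<length t}"
      "pa \<psi> \<phi> = (\<Sum>j\<in>Y0. t ! j)" "D \<in> (\<lambda>j. t ! j) ` Y0"
      unfolding refines_def by blast
    obtain j0 where j0: "j0 \<in> Y0" "D = t ! j0" using t(4) by blast
    have DT: "D \<in> Tr uI (cm X Y)" using j0 t test_nth by auto
    have mu: "\<exists>\<mu>. sc (pa (ii X) b) D = \<mu> *\<^sub>R \<psi>" if b: "b \<in> Tr Y uI" for b
    proof -
      obtain Tb kb where Tb: "Tb \<in> Ts Y uI" "kb < length Tb" "Tb ! kb = b" using tr_in_test[OF b] by blast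
      have u: "map (pa (ii X)) Tb \<in> Ts (cm X Y) X" using par_l[OF id_test Tb(1)] by simp
      have "refines Th uI X (sc (map (pa (ii X)) Tb ! kb) (t ! j0))
             (\<Sum>j\<in>Y0. sc (sum_list (map (pa (ii X)) Tb)) (t ! j))"
        by (rule refine_post[OF t(1,2) j0(1) u]) (use Tb in simp)
      moreover have "(\<Sum>j\<in>Y0. sc (sum_list (map (pa (ii X)) Tb)) (t ! j)) = \<psi>"
      proof -
        have "sum_list (map (pa (ii X)) Tb) = pa (ii X) (ee Y)"
          using test_sum_eff[OF Tb(1)] by (simp add: pa_sumlistr[symmetric])
        then have "(\<Sum>j\<in>Y0. sc (sum_list (map (pa (ii X)) Tb)) (t ! j)) = sc (pa (ii X) (ee Y)) (pa \<psi> \<phi>)"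
          using t(3) by (simp add: sc_sumr)
        also have "\<dots> = pa (sc (ii X) \<psi>) (sc (ee Y) \<phi>)" by (rule prod_apply[OF psT phT id_tr eff_tr])
        also have "\<dots> = \<psi>" using eph psT by simp
        finally show ?thesis .
      qed
      ultimately have "refines Th uI X (sc (pa (ii X) b) D) \<psi>" using Tb j0 by simp
      then show ?thesis using p1 unfolding pure_def atomic_def by blast
    qed
    have "refines Th uI Y (sc (pa (ee X) (ii Y)) (t ! j0)) (\<Sum>j\<in>Y0. sc (pa (ee X) (ii Y)) (t ! j))"
      by (rule refine_post1[OF t(1,2) j0(1)]) (use par_single[OF caus1 id_test] in simp)
    moreover have "(\<Sum>j\<in>Y0. sc (pa (ee X) (ii Y)) (t ! j)) = \<phi>"
    proof -
      have "(\<Sum>j\<in>Y0. sc (pa (ee X) (ii Y)) (t ! j)) = sc (pa (ee X) (ii Y)) (pa \<psi> \<phi>)"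
        using t(3) by (simp add: sc_sumr)
      also have "\<dots> = pa (sc (ee X) \<psi>) (sc (ii Y) \<phi>)" by (rule prod_apply[OF psT phT eff_tr id_tr])
      also have "\<dots> = \<phi>" using eps phT by simp
      finally show ?thesis .
    qed
    ultimately have "refines Th uI Y (sc (pa (ee X) (ii Y)) D) \<phi>" using j0 by simp
    then obtain \<nu> where nu: "0 \<le> \<nu>" "\<nu> \<le> 1" "sc (pa (ee X) (ii Y)) D = \<nu> *\<^sub>R \<phi>"
      using p2 unfolding pure_def atomic_def by blast
    have "D = \<nu> *\<^sub>R pa \<psi> \<phi>"
    proof (rule locdisc[of _ X Y])
      show "D \<in> States Th (cm X Y)" using DT by (simp add: States_def)
      show "\<nu> *\<^sub>R pa \<psi> \<phi> \<in> States Th (cm X Y)"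
        using scale_tr[OF prod_tr[OF psT phT] nu(1,2)] by (simp add: States_def)
      fix a b assume a: "a \<in> Effects Th X" and b: "b \<in> Effects Th Y"
      have aT: "a \<in> Tr X uI" and bT: "b \<in> Tr Y uI" using a b by (auto simp: Effects_def)
      obtain \<mu> where m: "sc (pa (ii X) b) D = \<mu> *\<^sub>R \<psi>" using mu[OF bT] by blast
      obtain \<alpha> where al: "sc a \<psi> = \<alpha> *\<^sub>R ii uI" using probI sq_tr[OF psT aT] by blast
      obtain \<beta> where be: "sc b \<phi> = \<beta> *\<^sub>R ii uI" using probI sq_tr[OF phT bT] by blast
      have ab1: "pa a b = sc (pa a (ii uI)) (pa (ii X) b)"
        using interchange[OF id_tr aT bT id_tr] aT bT by simp
      have ab2: "pa (ee X) b = sc (pa (ii uI) b) (pa (ee X) (ii Y))"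
        using interchange[OF eff_tr id_tr id_tr bT] bT by (simp add: sq_idl[OF eff_tr] sq_idr[OF eff_tr])
      have L: "sc (pa a b) D = \<mu> *\<^sub>R sc a \<psi>"
      proof -
        have "sc (pa a b) D = sc (sc a (pa (ii X) b)) D" using ab1 aT by simp
        also have "\<dots> = sc a (sc (pa (ii X) b) D)"
          using sq_assoc[OF DT pr_tr[OF id_tr bT, simplified] aT] by simp
        finally show ?thesis using m by simp
      qed
      have L2: "sc (pa (ee X) b) D = \<nu> *\<^sub>R sc b \<phi>"
      proof -
        have "sc (pa (ee X) b) D = sc (sc b (pa (ee X) (ii Y))) D" using ab2 bT by simp
        also have "\<dots> = sc b (sc (pa (ee X) (ii Y)) D)"
          using sq_assoc[OF DT pr_tr[OF eff_tr id_tr, simplified] bT] by simp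
        finally show ?thesis using nu by simp
      qed
      have L3: "sc (pa (ee X) b) D = \<mu> *\<^sub>R ii uI"
      proof -
        have "sc (pa (ee X) b) D = sc (sc (ee X) (pa (ii X) b)) D"
          using interchange[OF id_tr eff_tr[of X] bT id_tr] bT pr_unitR[OF eff_tr[of X]] by (simp add: sq_idl[OF eff_tr] sq_idr[OF eff_tr])
        also have "\<dots> = sc (ee X) (sc (pa (ii X) b) D)"
          using sq_assoc[OF DT pr_tr[OF id_tr bT, simplified] eff_tr] by simp
        finally show ?thesis using m eps by simp
      qed
      have "\<mu> = \<nu> * \<beta>" using L2 L3 be scaleI_inj by simp
      then have "sc (pa a b) D = (\<nu> * \<beta> * \<alpha>) *\<^sub>R ii uI" using L al by simp
      moreover have "sc (pa a b) (\<nu> *\<^sub>R pa \<psi> \<phi>) = (\<nu> * \<beta> * \<alpha>) *\<^sub>R ii uI"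
        using prod_apply[OF psT phT aT bT] al be by (simp add: iiI_pa)
      ultimately show "sc (pa a b) D = sc (pa a b) (\<nu> *\<^sub>R pa \<psi> \<phi>)" by simp
    qed
    then show "\<exists>lam. 0 \<le> lam \<and> lam \<le> 1 \<and> D = lam *\<^sub>R pa \<psi> \<phi>" using nu by blast
  qed
  then show ?thesis using st by (simp add: pure_def)
qed

end


context optfw begin

lemma ii_ii[simp]: "sc (ii A) (ii A) = ii A" using sq_idl[OF id_tr] .
lemma ee_ii[simp]: "sc (ee A) (ii A) = ee A" using sq_idr[OF eff_tr] .
lemma iI_ee[simp]: "sc (ii uI) (ee A) = ee A" using sq_idl[OF eff_tr] .
lemma pa_ee_iI[simp]: "pa (ee A) (ii uI) = ee A" using pr_unitR[OF eff_tr] .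
lemma pa_iI_ee[simp]: "pa (ii uI) (ee A) = ee A" using pr_unitL[OF eff_tr] .

lemma sw_tr: "sw A B \<in> Tr (cm A B) (cm B A)"
  using swap_ch by (simp add: channel_def)
lemma sw_ch: "sc (ee (cm B A)) (sw A B) = ee (cm A B)"
  using swap_ch by (simp add: channel_def)
lemma sw_test: "[sw A B] \<in> Ts (cm A B) (cm B A)"
  by (rule channel_test[OF sw_tr sw_ch])

lemma swII: "sw uI uI = ii uI"
proof -
  have "sc (ee uI) (sw uI uI) = ee uI" using sw_ch[of uI uI] by simp
  moreover have "sw uI uI \<in> Tr uI uI" using sw_tr[of uI uI] by simp
  ultimately show ?thesis using eI by simp
qed

lemma sw_unit_state: "\<rho> \<in> Tr uI X \<Longrightarrow> sc (sw uI X) \<rho> = \<rho>"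
  using swap_nat[of "ii uI" uI uI \<rho> uI X] id_tr[of uI] by (simp add: swII)

lemma ch_state: "\<Phi> \<in> States1 Th Z \<Longrightarrow> [V] \<in> Ts Z Z' \<Longrightarrow> sc V \<Phi> \<in> States1 Th Z'"
  using test_states1 sq_single states1_test by blast

lemma marg_swap:
  assumes G: "\<Gamma> \<in> Tr uI (cm X Y)"
  shows "sc (pa (ii Y) (ee X)) (sc (sw X Y) \<Gamma>) = sc (pa (ee X) (ii Y)) \<Gamma>"
proof -
  have "sc (pa (ii Y) (ee X)) (sc (sw X Y) \<Gamma>) = sc (sc (pa (ii Y) (ee X)) (sw X Y)) \<Gamma>"
    using sq_assoc[OF G sw_tr pr_tr[OF id_tr eff_tr]] by simp
  also have "\<dots> = sc (sc (sw uI Y) (pa (ee X) (ii Y))) \<Gamma>"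
    using swap_nat[OF eff_tr[of X] id_tr[of Y]] by simp
  also have "\<dots> = sc (sw uI Y) (sc (pa (ee X) (ii Y)) \<Gamma>)"
    using sq_assoc[OF G pr_tr[OF eff_tr id_tr] sw_tr[of uI Y], simplified] by simp
  also have "\<dots> = sc (pa (ee X) (ii Y)) \<Gamma>"
    by (rule sw_unit_state) (use sq_tr[OF G pr_tr[OF eff_tr id_tr]] in simp)
  finally show ?thesis .
qed

lemma marg2:
  assumes P: "\<Phi> \<in> Tr uI (cm P (cm Q R))"
  shows "sc (pa (ii P) (ee (cm Q R))) \<Phi> = sc (pa (ii P) (ee Q)) (sc (pa (ii (cm P Q)) (ee R)) \<Phi>)"
proof -
  have g: "pa (ii P) (ee Q) \<in> Tr (cm P Q) P" using pr_tr[OF id_tr eff_tr, of P Q] by simp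
  have f: "ii (cm P Q) \<in> Tr (cm P Q) (cm P Q)" by (rule id_tr)
  have "sc (pa (ii P) (ee Q)) (sc (pa (ii (cm P Q)) (ee R)) \<Phi>)
      = sc (pa (sc (pa (ii P) (ee Q)) (ii (cm P Q))) (sc (ii uI) (ee R))) \<Phi>"
    using scpa_comp[OF f g eff_tr[of R] id_tr[of uI], of \<Phi> uI] P g pr_unitR[OF g] by simp
  also have "\<dots> = sc (pa (pa (ii P) (ee Q)) (ee R)) \<Phi>"
    using g by (simp add: sq_idl[OF eff_tr])
  also have "\<dots> = sc (pa (ii P) (ee (cm Q R))) \<Phi>"
    by (simp add: eff_cmp pr_assoc[OF id_tr eff_tr eff_tr])
  finally show ?thesis by simp
qed

lemma marg_prod:
  assumes S: "\<Psi> \<in> Tr uI (cm P Q)" and F: "\<Phi> \<in> States1 Th R"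
  shows "sc (pa (ii P) (ee (cm Q R))) (pa \<Psi> \<Phi>) = sc (pa (ii P) (ee Q)) \<Psi>"
proof -
  have FT: "\<Phi> \<in> Tr uI R" and e: "sc (ee R) \<Phi> = ii uI" using F by (auto simp: States1_def States_def)
  have "pa (ii P) (ee (cm Q R)) = pa (pa (ii P) (ee Q)) (ee R)"
    by (simp add: eff_cmp pr_assoc[OF id_tr eff_tr eff_tr])
  then have "sc (pa (ii P) (ee (cm Q R))) (pa \<Psi> \<Phi>) = pa (sc (pa (ii P) (ee Q)) \<Psi>) (sc (ee R) \<Phi>)"
    using prod_apply[OF S FT pr_tr[OF id_tr eff_tr] eff_tr] by simp
  also have "\<dots> = sc (pa (ii P) (ee Q)) \<Psi>"
    using e sq_tr[OF S pr_tr[OF id_tr eff_tr]] by simp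
  finally show ?thesis .
qed

lemma discard_prod:
  assumes S: "\<Phi> \<in> Tr uI P" and F: "\<Psi> \<in> States1 Th R"
  shows "sc (pa (ii P) (ee R)) (pa \<Phi> \<Psi>) = \<Phi>"
proof -
  have FT: "\<Psi> \<in> Tr uI R" and e: "sc (ee R) \<Psi> = ii uI" using F by (auto simp: States1_def States_def)
  show ?thesis using prod_apply[OF S FT id_tr eff_tr] e S by simp
qed

lemma marg_ch:
  assumes V: "[V] \<in> Ts Q' Q" and F: "\<Phi> \<in> Tr uI (cm P Q')"
  shows "sc (pa (ii P) (ee Q)) (sc (pa (ii P) V) \<Phi>) = sc (pa (ii P) (ee Q')) \<Phi>"
  using scpa_comp[OF id_tr id_tr single_tr[OF V] eff_tr F] test_channel[OF V] by simp

lemma prod_states1: "\<Psi> \<in> States1 Th X \<Longrightarrow> \<Phi> \<in> States1 Th Y \<Longrightarrow> pa \<Psi> \<Phi> \<in> States1 Th (cm X Y)"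
proof -
  assume a: "\<Psi> \<in> States1 Th X" "\<Phi> \<in> States1 Th Y"
  have "[pa \<Psi> \<Phi>] \<in> Ts (cm uI uI) (cm X Y)" using par_single[OF states1_test[OF a(1)] states1_test[OF a(2)]] .
  then show ?thesis using test_states1 by simp
qed

lemma comp_id_left:
  assumes "f \<in> Tr A B" "g \<in> Tr B C" "\<rho> \<in> Tr Z (cm P A)"
  shows "sc (pa (ii P) g) (sc (pa (ii P) f) \<rho>) = sc (pa (ii P) (sc g f)) \<rho>"
  using scpa_comp[OF id_tr id_tr assms] by simp

lemma prod_as_apply:
  assumes S: "\<Psi> \<in> Tr uI (cm P A)" and F: "\<Phi> \<in> Tr uI R"
  shows "pa \<Psi> \<Phi> = sc (pa (ii P) (pa (ii A) \<Phi>)) \<Psi>"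
proof -
  have "sc (pa (ii (cm P A)) \<Phi>) (pa \<Psi> (ii uI)) = pa (sc (ii (cm P A)) \<Psi>) (sc \<Phi> (ii uI))"
    using interchange[OF S id_tr id_tr F] .
  then have "sc (pa (ii (cm P A)) \<Phi>) \<Psi> = pa \<Psi> \<Phi>" using S F by simp
  moreover have "pa (ii (cm P A)) \<Phi> = pa (ii P) (pa (ii A) \<Phi>)"
    by (simp add: id_cmp pr_assoc[OF id_tr id_tr F])
  ultimately show ?thesis by simp
qed

end


context optfw begin

lemma idc_assoc: "f \<in> Tr A B \<Longrightarrow> pa (ii (cm P Q)) f = pa (ii P) (pa (ii Q) f)"
  by (simp only: id_cmp pr_assoc[OF id_tr id_tr])

lemma reord:
  fixes R S T :: 's
  defines "W \<equiv> sc (pa (sw S T) (ii R)) (sw R (cm S T))"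
    and "Wi \<equiv> sc (sw (cm S T) R) (pa (sw T S) (ii R))"
  shows "[W] \<in> Ts (cm R (cm S T)) (cm T (cm S R))"
    and "[Wi] \<in> Ts (cm T (cm S R)) (cm R (cm S T))"
    and "sc Wi W = ii (cm R (cm S T))"
    and "sc W Wi = ii (cm T (cm S R))"
proof -
  have s1: "[sw R (cm S T)] \<in> Ts (cm R (cm S T)) (cm S (cm T R))" using sw_test[of R "cm S T"] by simp
  have p1: "[pa (sw S T) (ii R)] \<in> Ts (cm S (cm T R)) (cm T (cm S R))"
    using par_single[OF sw_test[of S T] id_test[of R]] by simp
  have s2: "[sw (cm S T) R] \<in> Ts (cm S (cm T R)) (cm R (cm S T))" using sw_test[of "cm S T" R] by simp
  have p2: "[pa (sw T S) (ii R)] \<in> Ts (cm T (cm S R)) (cm S (cm T R))"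
    using par_single[OF sw_test[of T S] id_test[of R]] by simp
  show "[W] \<in> Ts (cm R (cm S T)) (cm T (cm S R))" unfolding W_def by (rule sq_single[OF s1 p1])
  show "[Wi] \<in> Ts (cm T (cm S R)) (cm R (cm S T))" unfolding Wi_def by (rule sq_single[OF p2 s2])
  note s1t = single_tr[OF s1] and p1t = single_tr[OF p1] and s2t = single_tr[OF s2] and p2t = single_tr[OF p2]
  have e1: "sc (pa (sw T S) (ii R)) (pa (sw S T) (ii R)) = ii (cm S (cm T R))"
    using interchange[OF sw_tr[of S T] sw_tr[of T S] id_tr[of R] id_tr[of R]] swap_inv[of T S]
    by (simp add: id_cmp[symmetric])
  have e2: "sc (pa (sw S T) (ii R)) (pa (sw T S) (ii R)) = ii (cm T (cm S R))"
    using interchange[OF sw_tr[of T S] sw_tr[of S T] id_tr[of R] id_tr[of R]] swap_inv[of S T]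
    by (simp add: id_cmp[symmetric])
  have e3: "sc (sw (cm S T) R) (sw R (cm S T)) = ii (cm R (cm S T))" using swap_inv[of "cm S T" R] by simp
  have e4: "sc (sw R (cm S T)) (sw (cm S T) R) = ii (cm S (cm T R))" using swap_inv[of R "cm S T"] by simp
  have "sc Wi W = sc (sw (cm S T) R) (sc (pa (sw T S) (ii R)) (sc (pa (sw S T) (ii R)) (sw R (cm S T))))"
    unfolding W_def Wi_def
    using sq_assoc[OF sq_tr[OF s1t p1t] p2t s2t] sq_assoc[OF s1t p1t p2t] by simp
  also have "\<dots> = ii (cm R (cm S T))" using e1 e3 s1t sq_assoc[OF s1t p1t p2t] by simp
  finally show "sc Wi W = ii (cm R (cm S T))" .
  have "sc W Wi = sc (pa (sw S T) (ii R)) (sc (sw R (cm S T)) (sc (sw (cm S T) R) (pa (sw T S) (ii R))))"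
    unfolding W_def Wi_def
    using sq_assoc[OF sq_tr[OF p2t s2t] s1t p1t] sq_assoc[OF p2t s2t s1t] by simp
  also have "\<dots> = ii (cm T (cm S R))" using e2 e4 p2t sq_assoc[OF p2t s2t s1t] by simp
  finally show "sc W Wi = ii (cm T (cm S R))" .
qed

lemma swap_back:
  assumes P: "\<Psi> \<in> Tr uI (cm A At)" and V: "V \<in> Tr A X"
  shows "sc (sw At X) (sc (pa (ii At) V) (sc (sw A At) \<Psi>)) = sc (pa V (ii At)) \<Psi>"
proof -
  have "sc (sw At X) (sc (pa (ii At) V) (sc (sw A At) \<Psi>)) = sc (sc (sw At X) (pa (ii At) V)) (sc (sw A At) \<Psi>)"
    using sq_assoc[OF sq_tr[OF P sw_tr] pr_tr[OF id_tr V] sw_tr] by simp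
  also have "\<dots> = sc (sc (pa V (ii At)) (sw At A)) (sc (sw A At) \<Psi>)"
    using swap_nat[OF id_tr[of At] V] by simp
  also have "\<dots> = sc (pa V (ii At)) (sc (sw At A) (sc (sw A At) \<Psi>))"
    using sq_assoc[OF sq_tr[OF P sw_tr] sw_tr pr_tr[OF V id_tr]] by simp
  also have "\<dots> = sc (pa V (ii At)) \<Psi>"
    using sq_assoc[OF P sw_tr sw_tr] swap_inv[of At A] P by simp
  finally show ?thesis .
qed

end

locale optpur = optfw Th for Th :: "('s, 't::real_normed_vector) opt" +
  fixes A At :: 's and \<Psi> :: 't
  assumes pur: "purification_postulate Th"
    and Psi1: "\<Psi> \<in> States1 Th (cmp Th A At)"
    and Psip: "pure Th (cmp Th A At) \<Psi>"
begin

abbreviation "wt \<equiv> sc (pa (ee A) (ii At)) \<Psi>"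

lemma purify: "\<rho> \<in> States1 Th Y \<Longrightarrow> \<exists>D \<Phi>. pure Th (cm Y D) \<Phi> \<and> \<Phi> \<in> States1 Th (cm Y D) \<and>
    sc (pa (ii Y) (ee D)) \<Phi> = \<rho>"
  using pur unfolding purification_postulate_def marginal_def by blast

lemma uniq: "\<Phi> \<in> States1 Th (cm Y Z) \<Longrightarrow> \<Phi>' \<in> States1 Th (cm Y Z) \<Longrightarrow>
   pure Th (cm Y Z) \<Phi> \<Longrightarrow> pure Th (cm Y Z) \<Phi>' \<Longrightarrow>
   sc (pa (ii Y) (ee Z)) \<Phi> = sc (pa (ii Y) (ee Z)) \<Phi>' \<Longrightarrow>
   \<exists>U. [U] \<in> Ts Z Z \<and> \<Phi>' = sc (pa (ii Y) U) \<Phi>"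
proof -
  assume a: "\<Phi> \<in> States1 Th (cm Y Z)" "\<Phi>' \<in> States1 Th (cm Y Z)"
    "pure Th (cm Y Z) \<Phi>" "pure Th (cm Y Z) \<Phi>'"
    "sc (pa (ii Y) (ee Z)) \<Phi> = sc (pa (ii Y) (ee Z)) \<Phi>'"
  then obtain U where U: "U \<in> RevGroup Th Z" "\<Phi>' = sc (pa (ii Y) U) \<Phi>"
    using pur unfolding purification_postulate_def marginal_def by blast
  then have "[U] \<in> Ts Z Z"
    by (intro channel_test) (auto simp: RevGroup_def reversible_def channel_def)
  then show ?thesis using U by blast
qed

lemma PsiT: "\<Psi> \<in> Tr uI (cm A At)" using Psi1 by (simp add: States1_def States_def)

lemma extn:
  assumes G: "\<Gamma> \<in> States1 Th (cm X At)" and mG: "sc (pa (ee X) (ii At)) \<Gamma> = wt"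
  shows "\<exists>V. [V] \<in> Ts A X \<and> \<Gamma> = sc (pa V (ii At)) \<Psi>"
proof -
  define Ps where "Ps = sc (sw A At) \<Psi>"
  have Ps1: "Ps \<in> States1 Th (cm At A)" unfolding Ps_def by (rule ch_state[OF Psi1 sw_test])
  have PsT: "Ps \<in> Tr uI (cm At A)" using Ps1 by (simp add: States1_def States_def)
  have Psp: "pure Th (cm At A) Ps"
    using pure_rev[of uI "cm A At" \<Psi> "sw A At" "cm At A" "sw At A"] Psip sw_tr[of A At] sw_test[of At A]
      swap_inv[of At A] swap_inv[of A At] pr_unitL[OF sw_tr[of A At]]
    by (simp add: Ps_def)
  have mPs: "sc (pa (ii At) (ee A)) Ps = wt" unfolding Ps_def by (rule marg_swap[OF PsiT])
  have GT: "\<Gamma> \<in> Tr uI (cm X At)" using G by (simp add: States1_def States_def)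
  define Gs where "Gs = sc (sw X At) \<Gamma>"
  have Gs1: "Gs \<in> States1 Th (cm At X)" unfolding Gs_def by (rule ch_state[OF G sw_test])
  have mGs: "sc (pa (ii At) (ee X)) Gs = wt" unfolding Gs_def using marg_swap[OF GT] mG by simp
  obtain D \<Phi> where Pp0: "pure Th (cm (cm At X) D) \<Phi>" and P10: "\<Phi> \<in> States1 Th (cm (cm At X) D)"
    and mP0: "sc (pa (ii (cm At X)) (ee D)) \<Phi> = Gs"
    using purify[OF Gs1] by blast
  have Pp: "pure Th (cm At (cm X D)) \<Phi>" using Pp0 by simp
  have P1: "\<Phi> \<in> States1 Th (cm At (cm X D))" using P10 by simp
  have PT: "\<Phi> \<in> Tr uI (cm At (cm X D))" using P1 by (simp add: States1_def States_def)
  have mP: "sc (pa (ii At) (ee (cm X D))) \<Phi> = wt"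
    using marg2[OF PT] mP0 mGs by simp
  define P1 where "P1 = pa Ps \<Phi>"
  have P11: "P1 \<in> States1 Th (cm At (cm A (cm At (cm X D))))"
    using prod_states1[OF Ps1 P1] by (simp add: P1_def)
  have P1p: "pure Th (cm At (cm A (cm At (cm X D)))) P1"
    using pure_prod[OF Ps1 Psp P1 Pp] by (simp add: P1_def)
  have mP1: "sc (pa (ii At) (ee (cm A (cm At (cm X D))))) P1 = wt"
    unfolding P1_def using marg_prod[OF PsT P1] mPs by simp
  define P2 where "P2 = pa \<Phi> Ps"
  have P21: "P2 \<in> States1 Th (cm At (cm (cm X D) (cm At A)))"
    using prod_states1[OF P1 Ps1] by (simp add: P2_def)
  have P2T: "P2 \<in> Tr uI (cm At (cm (cm X D) (cm At A)))" using P21 by (simp add: States1_def States_def)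
  have P2p: "pure Th (cm At (cm (cm X D) (cm At A))) P2"
    using pure_prod[OF P1 Pp Ps1 Psp] by (simp add: P2_def)
  have mP2: "sc (pa (ii At) (ee (cm (cm X D) (cm At A)))) P2 = wt"
    unfolding P2_def using marg_prod[OF PT Ps1] mP by simp
  define W where "W = sc (pa (sw At A) (ii (cm X D))) (sw (cm X D) (cm At A))"
  define Wi where "Wi = sc (sw (cm At A) (cm X D)) (pa (sw A At) (ii (cm X D)))"
  note R = reord[of At A "cm X D", folded W_def Wi_def]
  have Wt: "[W] \<in> Ts (cm (cm X D) (cm At A)) (cm A (cm At (cm X D)))" using R(1) by simp
  have Wit: "[Wi] \<in> Ts (cm A (cm At (cm X D))) (cm (cm X D) (cm At A))" using R(2) by simp
  have WiW: "sc Wi W = ii (cm (cm X D) (cm At A))" using R(3) by simp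
  have WWi: "sc W Wi = ii (cm A (cm At (cm X D)))" using R(4) by simp
  define P2' where "P2' = sc (pa (ii At) W) P2"
  have P2'1: "P2' \<in> States1 Th (cm At (cm A (cm At (cm X D))))"
    unfolding P2'_def by (rule ch_state[OF P21 par_single[OF id_test Wt], simplified])
  have P2'p: "pure Th (cm At (cm A (cm At (cm X D)))) P2'"
    unfolding P2'_def by (rule pure_rev[OF P2p single_tr[OF Wt] Wit WiW WWi])
  have mP2': "sc (pa (ii At) (ee (cm A (cm At (cm X D))))) P2' = wt"
    unfolding P2'_def using marg_ch[OF Wt P2T] mP2 by simp
  obtain U where Ut: "[U] \<in> Ts (cm A (cm At (cm X D))) (cm A (cm At (cm X D)))"
    and UP: "P2' = sc (pa (ii At) U) P1"
    using uniq[OF P11 P2'1 P1p P2'p] mP1 mP2' by metis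
  define V1 where "V1 = pa (ii A) \<Phi>"
  have V1t: "[V1] \<in> Ts A (cm A (cm At (cm X D)))"
    using par_single[OF id_test[of A] states1_test[OF P1]] by (simp add: V1_def)
  have eq1: "P1 = sc (pa (ii At) V1) Ps" unfolding P1_def V1_def by (rule prod_as_apply[OF PsT PT])
  define V4 where "V4 = pa (ii (cm X D)) (ee (cm At A))"
  have V4t: "[V4] \<in> Ts (cm (cm X D) (cm At A)) (cm X D)"
    using par_single[OF id_test[of "cm X D"] caus1[of "cm At A"]] by (simp add: V4_def)
  have eq4: "\<Phi> = sc (pa (ii At) V4) P2"
  proof -
    have "pa (ii (cm At (cm X D))) (ee (cm At A)) = pa (ii At) V4"
      unfolding V4_def by (rule idc_assoc[OF eff_tr])
    then show ?thesis using discard_prod[OF PT Ps1] by (simp add: P2_def)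
  qed
  define V5 where "V5 = pa (ii X) (ee D)"
  have V5t: "[V5] \<in> Ts (cm X D) X"
    using par_single[OF id_test[of X] caus1[of D]] by (simp add: V5_def)
  have eq5: "Gs = sc (pa (ii At) V5) \<Phi>"
  proof -
    have "pa (ii (cm At X)) (ee D) = pa (ii At) V5"
      unfolding V5_def by (rule idc_assoc[OF eff_tr])
    then show ?thesis using mP0 by simp
  qed
  have eq3: "P2 = sc (pa (ii At) Wi) P2'"
    unfolding P2'_def using comp_id_left[OF single_tr[OF Wt] single_tr[OF Wit] P2T] WiW P2T
    by (simp add: id_cmp[symmetric])
  note t1 = single_tr[OF V1t] and tU = single_tr[OF Ut] and tWi = single_tr[OF Wit]
    and t4 = single_tr[OF V4t] and t5 = single_tr[OF V5t]
  define V where "V = sc V5 (sc V4 (sc Wi (sc U V1)))"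
  have Vt: "[V] \<in> Ts A X"
    unfolding V_def by (rule sq_single[OF sq_single[OF sq_single[OF sq_single[OF V1t Ut] Wit] V4t] V5t])
  have "Gs = sc (pa (ii At) V) Ps"
  proof -
    have a1: "sc (pa (ii At) V1) Ps \<in> Tr uI (cm At (cm A (cm At (cm X D))))"
      using sq_tr[OF PsT pr_tr[OF id_tr t1]] by simp
    have "P2' = sc (pa (ii At) (sc U V1)) Ps"
      using UP eq1 comp_id_left[OF t1 tU PsT] by simp
    then have "P2 = sc (pa (ii At) (sc Wi (sc U V1))) Ps"
      using eq3 comp_id_left[OF sq_tr[OF t1 tU] tWi PsT] by simp
    then have "\<Phi> = sc (pa (ii At) (sc V4 (sc Wi (sc U V1)))) Ps"
      using eq4 comp_id_left[OF sq_tr[OF sq_tr[OF t1 tU] tWi] t4 PsT] by simp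
    then show ?thesis
      using eq5 comp_id_left[OF sq_tr[OF sq_tr[OF sq_tr[OF t1 tU] tWi] t4] t5 PsT] by (simp add: V_def)
  qed
  moreover have "\<Gamma> = sc (sw At X) Gs"
    unfolding Gs_def using sq_assoc[OF GT sw_tr sw_tr] swap_inv[of At X] GT by simp
  ultimately have "\<Gamma> = sc (pa V (ii At)) \<Psi>"
    using swap_back[OF PsiT single_tr[OF Vt]] by (simp add: Ps_def)
  then show ?thesis using Vt by blast
qed

end


context optfw begin

definition distfam where
  "distfam n F \<alpha> ds \<longleftrightarrow> ds \<in> Ts F uI \<and> length ds = n \<and> (\<forall>i<n. \<alpha> i \<in> States1 Th F) \<and>
     (\<forall>i<n. \<forall>j<n. sc (ds ! j) (\<alpha> i) = (if i = j then ii uI else 0))"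

lemma pa_eff_left: assumes dF: "d \<in> Tr F uI" and aB: "a \<in> Tr B uI" shows "sc d (pa (ii F) a) = pa d a"
  using interchange[OF id_tr[of F] dF aB id_tr[of uI]] dF aB by simp

lemma dist: "\<exists>F \<alpha> ds. distfam (Suc n) F \<alpha> ds"
proof (induction n)
  case 0
  have "distfam 1 uI (\<lambda>_. ii uI) [ii uI]"
    unfolding distfam_def using id_test[of uI] id_tr[of uI]
    by (auto simp: States1_def States_def eI)
  then show ?case by auto
next
  case (Suc n)
  then obtain F \<alpha> ds where d: "distfam (Suc n) F \<alpha> ds" by blast
  obtain A0 \<rho>0 \<rho>1 a0 a1 where p: "\<rho>0 \<in> States1 Th A0" "\<rho>1 \<in> States1 Th A0" "[a0, a1] \<in> Ts A0 uI"
      "sc a0 \<rho>0 = ii uI" "sc a1 \<rho>1 = ii uI" "sc a0 \<rho>1 = 0" "sc a1 \<rho>0 = 0"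
    using distpair by blast
  have a0T: "a0 \<in> Tr A0 uI" and a1T: "a1 \<in> Tr A0 uI" using p(3) test_mem by fastforce+
  have r0T: "\<rho>0 \<in> Tr uI A0" and r1T: "\<rho>1 \<in> Tr uI A0" using p(1,2) by (auto simp: States1_def States_def)
  define m where "m = Suc n"
  have ds: "ds \<in> Ts F uI" "length ds = m" and al: "\<And>i. i < m \<Longrightarrow> \<alpha> i \<in> States1 Th F"
    and dd: "\<And>i j. i < m \<Longrightarrow> j < m \<Longrightarrow> sc (ds ! j) (\<alpha> i) = (if i = j then ii uI else 0)"
    using d unfolding distfam_def m_def by auto
  have alT: "\<And>i. i < m \<Longrightarrow> \<alpha> i \<in> Tr uI F" using al by (auto simp: States1_def States_def)
  have dT: "\<And>j. j < m \<Longrightarrow> ds ! j \<in> Tr F uI" using test_nth[OF ds(1)] ds(2) by auto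
  define t where "t = [pa (ii F) a0, pa (ii F) a1]"
  have t: "t \<in> Ts (cm F A0) F" using par_l[OF id_test[of F] p(3)] by (simp add: t_def)
  define u where "u i = (if i = 0 then ds else [ee F])" for i :: nat
  have T: "concat (map (\<lambda>i. map (\<lambda>g. sc g (t ! i)) (u i)) [0..<length t]) \<in> Ts (cm F A0) uI"
    by (rule test_cond[OF t]) (use ds caus1 in \<open>auto simp: u_def\<close>)
  define ds' where "ds' = map (\<lambda>d. pa d a0) ds @ [pa (ee F) a1]"
  have "concat (map (\<lambda>i. map (\<lambda>g. sc g (t ! i)) (u i)) [0..<length t])
        = map (\<lambda>g. sc g (pa (ii F) a0)) ds @ [sc (ee F) (pa (ii F) a1)]"
    by (simp add: t_def u_def upt_rec)
  also have "\<dots> = ds'"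
  proof -
    have "map (\<lambda>g. sc g (pa (ii F) a0)) ds = map (\<lambda>d. pa d a0) ds"
      by (rule map_cong[OF refl]) (use test_mem[OF ds(1)] pa_eff_left[OF _ a0T] in auto)
    then show ?thesis using pa_eff_left[OF eff_tr a1T] by (simp add: ds'_def)
  qed
  finally have ds't: "ds' \<in> Ts (cm F A0) uI" using T by simp
  define \<alpha>' where "\<alpha>' i = (if i < m then pa (\<alpha> i) \<rho>0 else pa (\<alpha> 0) \<rho>1)" for i
  have "distfam (Suc m) (cm F A0) \<alpha>' ds'"
    unfolding distfam_def
  proof (intro conjI allI impI)
    show "ds' \<in> Ts (cm F A0) uI" by (rule ds't)
    show "length ds' = Suc m" using ds by (simp add: ds'_def)
    fix i assume i: "i < Suc m"
    have m0: "0 < m" by (simp add: m_def)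
    show "\<alpha>' i \<in> States1 Th (cm F A0)"
      using prod_states1[OF al p(1)] prod_states1[OF al[OF m0] p(2)] i by (auto simp: \<alpha>'_def)
    fix j assume j: "j < Suc m"
    have cA: "\<And>i x. i < m \<Longrightarrow> x \<in> Tr uI A0 \<Longrightarrow> sc (pa (ds ! j) a0) (pa (\<alpha> i) x) = pa (sc (ds ! j) (\<alpha> i)) (sc a0 x)"
      if "j < m" for j using prod_apply[OF alT _ dT[OF that] a0T] by blast
    have cB: "\<And>i x. i < m \<Longrightarrow> x \<in> Tr uI A0 \<Longrightarrow> sc (pa (ee F) a1) (pa (\<alpha> i) x) = pa (sc (ee F) (\<alpha> i)) (sc a1 x)"
      using prod_apply[OF alT _ eff_tr a1T] by blast
    have eal: "\<And>i. i < m \<Longrightarrow> sc (ee F) (\<alpha> i) = ii uI" using al by (auto simp: States1_def)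
    have nth1: "j < m \<Longrightarrow> ds' ! j = pa (ds ! j) a0" using ds by (simp add: ds'_def nth_append)
    have nth2: "ds' ! m = pa (ee F) a1" using ds by (simp add: ds'_def nth_append)
    show "sc (ds' ! j) (\<alpha>' i) = (if i = j then ii uI else 0)"
    proof (cases "j < m")
      case True
      show ?thesis
      proof (cases "i < m")
        case True
        then show ?thesis using cA[OF \<open>j<m\<close> True r0T] nth1[OF \<open>j<m\<close>] dd[OF True \<open>j<m\<close>] p(4)
          by (simp add: \<alpha>'_def iiI_pa)
      next
        case False
        then show ?thesis using cA[OF \<open>j<m\<close> m0 r1T] nth1[OF \<open>j<m\<close>] p(6) \<open>j<m\<close>
          by (simp add: \<alpha>'_def)
      qed
    next
      case False
      then have jm: "j = m" using j by simp
      show ?thesis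
      proof (cases "i < m")
        case True
        then show ?thesis using cB[OF True r0T] nth2 jm p(7) by (simp add: \<alpha>'_def)
      next
        case False
        then have "i = m" using i by simp
        then show ?thesis using cB[OF m0 r1T] nth2 jm p(5) eal[OF m0] by (simp add: \<alpha>'_def iiI_pa)
      qed
    qed
  qed
  then show ?case unfolding m_def by blast
qed

end


context optpur begin

definition ins where "ins B \<alpha> = pa (ii B) (pa \<alpha> (ii At))"
definition RR where "RR C = sc (pa C (ii At)) \<Psi>"
definition mg where "mg B S = sc (pa (ee B) (ii At)) S"

lemma ins_tr: "\<alpha> \<in> Tr uI F \<Longrightarrow> ins B \<alpha> \<in> Tr (cm B At) (cm B (cm F At))"
  unfolding ins_def using pr_tr[OF id_tr[of B] pr_tr[of \<alpha> uI F "ii At" At At]] id_tr[of At] by simp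

lemma ins_test: "\<alpha> \<in> States1 Th F \<Longrightarrow> [ins B \<alpha>] \<in> Ts (cm B At) (cm B (cm F At))"
  unfolding ins_def using par_single[OF id_test[of B] par_single[OF states1_test id_test[of At]]] by simp

lemma iiI_At: "pa (ii uI) (ii X) = ii X" using pr_unitL[OF id_tr] .

lemma mg_ins:
  assumes a: "\<alpha> \<in> States1 Th F" and G: "G \<in> Tr uI (cm B At)"
  shows "mg (cm B F) (sc (ins B \<alpha>) G) = mg B G"
proof -
  have aT: "\<alpha> \<in> Tr uI F" and ea: "sc (ee F) \<alpha> = ii uI" using a by (auto simp: States1_def States_def)
  have e: "pa (ee (cm B F)) (ii At) = pa (ee B) (pa (ee F) (ii At))"
    by (simp add: eff_cmp pr_assoc[OF eff_tr eff_tr id_tr])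
  have "sc (pa (ee F) (ii At)) (pa \<alpha> (ii At)) = ii At"
    using interchange[OF aT eff_tr id_tr[of At] id_tr[of At]] ea by (simp add: iiI_At)
  moreover have "sc (pa (ee B) (pa (ee F) (ii At))) (sc (ins B \<alpha>) G)
      = sc (pa (sc (ee B) (ii B)) (sc (pa (ee F) (ii At)) (pa \<alpha> (ii At)))) G"
    unfolding ins_def
    by (rule scpa_comp[OF id_tr eff_tr _ _ G]) (use pr_tr[OF aT id_tr[of At]] pr_tr[OF eff_tr[of F] id_tr[of At]] in simp_all)
  ultimately show ?thesis unfolding mg_def using e by simp
qed

lemma extr:
  assumes d: "d \<in> Tr F uI" and a: "\<alpha> \<in> Tr uI F" and G: "G \<in> Tr uI (cm B At)"
    and c: "sc d \<alpha> = c *\<^sub>R ii uI"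
  shows "sc (pa (pa (ii B) d) (ii At)) (sc (ins B \<alpha>) G) = c *\<^sub>R G"
proof -
  have e: "pa (pa (ii B) d) (ii At) = pa (ii B) (pa d (ii At))" by (rule pr_assoc[OF id_tr d id_tr])
  have "sc (pa (ii B) (pa d (ii At))) (sc (ins B \<alpha>) G)
      = sc (pa (sc (ii B) (ii B)) (sc (pa d (ii At)) (pa \<alpha> (ii At)))) G"
    unfolding ins_def
    by (rule scpa_comp[OF id_tr id_tr _ _ G]) (use pr_tr[OF a id_tr[of At]] pr_tr[OF d id_tr[of At]] in simp_all)
  also have "sc (pa d (ii At)) (pa \<alpha> (ii At)) = c *\<^sub>R ii At"
    using interchange[OF a d id_tr[of At] id_tr[of At]] c by (simp add: iiI_At)
  finally show ?thesis using e G by (simp add: id_cmp[symmetric])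
qed

lemma gen:
  assumes df: "distfam n F \<alpha> ds" and len: "length Gs = n"
    and GT: "\<And>i. i < n \<Longrightarrow> Gs ! i \<in> Tr uI (cm B At)"
    and Gam: "[\<Sum>i<n. sc (ins B (\<alpha> i)) (Gs ! i)] \<in> Ts uI (cm B (cm F At))"
    and M: "(\<Sum>i<n. mg B (Gs ! i)) = wt"
  shows "\<exists>cs\<in>Ts A B. length cs = n \<and> (\<forall>i<n. RR (cs ! i) = Gs ! i)"
proof -
  have ds: "ds \<in> Ts F uI" "length ds = n" and al: "\<And>i. i < n \<Longrightarrow> \<alpha> i \<in> States1 Th F"
    and dd: "\<And>i j. i < n \<Longrightarrow> j < n \<Longrightarrow> sc (ds ! j) (\<alpha> i) = (if i = j then ii uI else 0)"
    using df unfolding distfam_def by auto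
  define \<Gamma> where "\<Gamma> = (\<Sum>i<n. sc (ins B (\<alpha> i)) (Gs ! i))"
  have G1: "\<Gamma> \<in> States1 Th (cm (cm B F) At)" using test_states1[OF Gam] by (simp add: \<Gamma>_def)
  have mG: "sc (pa (ee (cm B F)) (ii At)) \<Gamma> = wt"
  proof -
    have "sc (pa (ee (cm B F)) (ii At)) \<Gamma> = (\<Sum>i<n. mg (cm B F) (sc (ins B (\<alpha> i)) (Gs ! i)))"
      by (simp add: \<Gamma>_def sc_sumr mg_def)
    also have "\<dots> = (\<Sum>i<n. mg B (Gs ! i))" by (rule sum.cong) (auto simp: mg_ins al GT)
    finally show ?thesis using M by simp
  qed
  obtain V where V: "[V] \<in> Ts A (cm B F)" and GV: "\<Gamma> = sc (pa V (ii At)) \<Psi>"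
    using extn[OF G1 mG] by blast
  define cs where "cs = map (\<lambda>d. sc d V) (map (pa (ii B)) ds)"
  have cst: "cs \<in> Ts A B" unfolding cs_def
    using cond_single[OF V par_l[OF id_test[of B] ds(1)]] by simp
  have "RR (cs ! j) = Gs ! j" if j: "j < n" for j
  proof -
    have dj: "ds ! j \<in> Tr F uI" using test_nth[OF ds(1)] j ds(2) by simp
    have pd: "pa (ii B) (ds ! j) \<in> Tr (cm B F) B" using pr_tr[OF id_tr[of B] dj] by simp
    have VT: "V \<in> Tr A (cm B F)" using single_tr[OF V] .
    have "RR (cs ! j) = sc (pa (sc (pa (ii B) (ds ! j)) V) (sc (ii At) (ii At))) \<Psi>"
      using j ds(2) by (simp add: cs_def RR_def)
    also have "\<dots> = sc (pa (pa (ii B) (ds ! j)) (ii At)) \<Gamma>"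
      using scpa_comp[OF VT pd id_tr[of At] id_tr[of At] PsiT] GV by simp
    also have "\<dots> = (\<Sum>i<n. sc (pa (pa (ii B) (ds ! j)) (ii At)) (sc (ins B (\<alpha> i)) (Gs ! i)))"
      by (simp add: \<Gamma>_def sc_sumr)
    also have "\<dots> = (\<Sum>i<n. (if i = j then 1 else 0) *\<^sub>R Gs ! i)"
    proof (rule sum.cong[OF refl])
      fix i assume i: "i \<in> {..<n}"
      have aT: "\<alpha> i \<in> Tr uI F" using al i by (auto simp: States1_def States_def)
      have "sc (ds ! j) (\<alpha> i) = (if i = j then 1 else 0) *\<^sub>R ii uI" using dd[of i j] i j by simp
      then show "sc (pa (pa (ii B) (ds ! j)) (ii At)) (sc (ins B (\<alpha> i)) (Gs ! i)) = (if i = j then 1 else 0) *\<^sub>R Gs ! i"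
        using extr[OF dj aT GT] i by simp
    qed
    also have "\<dots> = (\<Sum>i<n. (if i = j then Gs ! i else 0))" by (rule sum.cong) auto
    also have "\<dots> = Gs ! j" using j by (simp add: sum.delta)
    finally show ?thesis .
  qed
  moreover have "length cs = n" using ds(2) by (simp add: cs_def)
  ultimately show ?thesis using cst by blast
qed

end


lemma sum_list_upt_lt: "sum_list (map f [0..<n]) = (\<Sum>i<n. f i)"
  by (simp add: interv_sum_list_conv_sum_set_nat atLeast0LessThan)

locale optfaith = optpur Th A At \<Psi> for Th :: "('s, 't::real_normed_vector) opt" and A At \<Psi> +
  assumes faith: "dyn_faithful Th A At \<Psi>"
begin

lemma RR_fun: "RR = (\<lambda>C. sc (pa C (ii At)) \<Psi>)" by (intro ext) (simp add: RR_def)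

lemma RR_tr: "C \<in> Tr A B \<Longrightarrow> RR C \<in> Tr uI (cm B At)"
  unfolding RR_def using sq_tr[OF PsiT pr_tr[OF _ id_tr[of At]]] by blast

lemma RR_sum: "RR (sum f K) = (\<Sum>k\<in>K. RR (f k))"
  unfolding RR_def by (simp add: pa_suml sc_suml)

lemma RR_scale: "RR (c *\<^sub>R C) = c *\<^sub>R RR C" unfolding RR_def by simp
lemma RR_add: "RR (C + C') = RR C + RR C'" unfolding RR_def by (simp add: pa_addl sc_addl)
lemma RR0: "RR 0 = 0" unfolding RR_def by simp

lemma RR_inj: "C \<in> Tr A B \<Longrightarrow> C' \<in> Tr A B \<Longrightarrow> RR C = RR C' \<Longrightarrow> C = C'"
  using faith unfolding dyn_faithful_def RR_def by blast

lemma mg_RR: "C \<in> Tr A B \<Longrightarrow> mg B (RR C) = sc (pa (sc (ee B) C) (ii At)) \<Psi>"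
  unfolding mg_def RR_def using scpa_comp[OF _ eff_tr id_tr[of At] id_tr[of At] PsiT] by simp

lemma map_RR_test: "t \<in> Ts A B \<Longrightarrow> map RR t \<in> Ts uI (cm B At)"
proof -
  assume t: "t \<in> Ts A B"
  have "map (\<lambda>g. sc g \<Psi>) (map (\<lambda>f. pa f (ii At)) t) \<in> Ts uI (cm B At)"
    by (rule cond_single[OF states1_test[OF Psi1] par_r[OF t id_test]])
  then show ?thesis by (simp add: RR_fun comp_def)
qed

lemma map_RR_marg: "t \<in> Ts A B \<Longrightarrow> sum_list (map (mg B) (map RR t)) = wt"
proof -
  assume t: "t \<in> Ts A B"
  have "map (mg B) (map RR t) = map (\<lambda>C. sc (pa (sc (ee B) C) (ii At)) \<Psi>) t"
    unfolding map_map comp_def by (rule map_cong[OF refl]) (use test_mem[OF t] mg_RR in blast)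
  then have "sum_list (map (mg B) (map RR t)) = sum_list (map (\<lambda>C. sc (pa (sc (ee B) C) (ii At)) \<Psi>) t)"
    by (simp only:)
  also have "\<dots> = sc (pa (sum_list (map (sc (ee B)) t)) (ii At)) \<Psi>"
    by (simp add: sc_sumlistl pa_sumlistl comp_def)
  finally show ?thesis using test_eff_sum[OF t] by simp
qed

lemma e_ch: assumes V: "[V] \<in> Ts X Y" and G: "G \<in> Tr uI X" shows "sc (ee Y) (sc V G) = sc (ee X) G"
  using sq_assoc[OF G single_tr[OF V] eff_tr[of Y]] test_channel[OF V] by simp

lemma e_wt: "sc (ee At) wt = ii uI"
proof -
  have "sc (ee At) wt = sc (pa (ee A) (ee At)) \<Psi>"
    using scpa_comp[OF eff_tr[of A] id_tr[of uI] id_tr[of At] eff_tr[of At] PsiT] by simp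
  then show ?thesis using Psi1 by (simp add: eff_cmp States1_def)
qed

lemma zero_outside:
  assumes s: "s \<in> Ts uI At" and Y: "Y0 \<subseteq> {..<length s}" and w: "(\<Sum>j\<in>Y0. s ! j) = wt"
    and j: "j < length s" "j \<notin> Y0"
  shows "s ! j = 0"
proof -
  have all: "(\<Sum>j<length s. sc (ee At) (s ! j)) = ii uI"
    using test_eff_sum[OF s] by (simp add: sum_map_nth eI)
  have "(\<Sum>j\<in>Y0. sc (ee At) (s ! j)) = sc (ee At) (\<Sum>j\<in>Y0. s ! j)" by (simp add: sc_sumr)
  then have part: "(\<Sum>j\<in>Y0. sc (ee At) (s ! j)) = ii uI" using e_wt w by simp
  have "(\<Sum>j<length s. sc (ee At) (s ! j)) = (\<Sum>j\<in>{..<length s} - Y0. sc (ee At) (s ! j)) + (\<Sum>j\<in>Y0. sc (ee At) (s ! j))"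
    using sum.subset_diff[OF Y] by simp
  then have z: "(\<Sum>j\<in>{..<length s} - Y0. sc (ee At) (s ! j)) = 0" using all part by simp
  have "sc (ee At) (s ! j) = 0"
    by (rule nonneg_sum0[OF _ _ z]) (use j in \<open>auto intro: sq_tr[OF test_nth[OF s] eff_tr]\<close>)
  then show ?thesis using state_zero test_nth[OF s j(1)] by (simp add: States_def)
qed

lemma mk_gamma:
  assumes s: "s \<in> Ts uI X" and y: "\<And>i. i < length s \<Longrightarrow> [y i] \<in> Ts X Z"
  shows "[\<Sum>i<length s. sc (y i) (s ! i)] \<in> Ts uI Z"
  using coarse_all[OF cond_idx[OF s y]] by (simp add: sum_list_upt_lt)

theorem part1: "bij_betw (map RR) (Ts A B) {Rs \<in> Ts uI (cm B At). sum_list (map (mg B) Rs) = wt}"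
  unfolding bij_betw_def
proof (intro conjI)
  show "inj_on (map RR) (Ts A B)"
  proof (rule inj_onI)
    fix t t' assume t: "t \<in> Ts A B" and t': "t' \<in> Ts A B" and e: "map RR t = map RR t'"
    have "inj_on RR (set t \<union> set t')"
      by (rule inj_onI) (use RR_inj test_mem[OF t] test_mem[OF t'] in blast)
    then show "t = t'" using e inj_on_map_eq_map by blast
  qed
  show "map RR ` Ts A B = {Rs \<in> Ts uI (cm B At). sum_list (map (mg B) Rs) = wt}"
  proof
    show "map RR ` Ts A B \<subseteq> {Rs \<in> Ts uI (cm B At). sum_list (map (mg B) Rs) = wt}"
      using map_RR_test map_RR_marg by auto
    show "{Rs \<in> Ts uI (cm B At). sum_list (map (mg B) Rs) = wt} \<subseteq> map RR ` Ts A B"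
    proof
      fix Rs assume "Rs \<in> {Rs \<in> Ts uI (cm B At). sum_list (map (mg B) Rs) = wt}"
      then have Rs: "Rs \<in> Ts uI (cm B At)" and M0: "sum_list (map (mg B) Rs) = wt" by auto
      obtain n where n: "length Rs = Suc n" using test_ne[OF Rs] by (cases Rs) auto
      obtain F \<alpha> ds where df: "distfam (Suc n) F \<alpha> ds" using dist by blast
      have al: "\<And>i. i < Suc n \<Longrightarrow> \<alpha> i \<in> States1 Th F" using df by (auto simp: distfam_def)
      have Gam: "[\<Sum>i<Suc n. sc (ins B (\<alpha> i)) (Rs ! i)] \<in> Ts uI (cm B (cm F At))"
        using mk_gamma[OF Rs, of "\<lambda>i. ins B (\<alpha> i)"] ins_test al n by simp
      have M: "(\<Sum>i<Suc n. mg B (Rs ! i)) = wt" using M0 n by (simp add: sum_map_nth)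
      obtain cs where cs: "cs \<in> Ts A B" "length cs = Suc n" "\<And>i. i < Suc n \<Longrightarrow> RR (cs ! i) = Rs ! i"
        using gen[OF df n _ Gam M] test_nth[OF Rs] n by auto
      have "map RR cs = Rs" by (rule nth_equalityI) (use cs n in auto)
      then show "Rs \<in> map RR ` Ts A B" using cs(1) by blast
    qed
  qed
qed

end


context optfaith begin

lemma mg_fun: "mg B = sc (pa (ee B) (ii At))" by (intro ext) (simp add: mg_def)

lemma mg_test: "[pa (ee B) (ii At)] \<in> Ts (cm B At) At"
  using par_single[OF caus1[of B] id_test[of At]] by simp

lemma mg_beta: assumes b: "\<beta> \<in> States1 Th B" and x: "x \<in> Tr uI At"
  shows "mg B (sc (pa \<beta> (ii At)) x) = x"
proof -
  have bT: "\<beta> \<in> Tr uI B" and eb: "sc (ee B) \<beta> = ii uI" using b by (auto simp: States1_def States_def)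
  have xT: "x \<in> Tr uI (cm uI At)" using x by simp
  have "mg B (sc (pa \<beta> (ii At)) x) = sc (pa (sc (ee B) \<beta>) (sc (ii At) (ii At))) x"
    unfolding mg_def by (rule scpa_comp[OF bT eff_tr id_tr id_tr xT])
  then show ?thesis using eb x by (simp add: iiI_At)
qed

lemma e_margB: "S \<in> Tr uI (cm B At) \<Longrightarrow> sc (ee B) (sc (pa (ii B) (ee At)) S) = sc (ee (cm B At)) S"
  using scpa_comp[OF id_tr[of B] eff_tr[of B] eff_tr[of At] id_tr[of uI], of S uI] by (simp add: eff_cmp)

lemma e_margAt: "S \<in> Tr uI (cm B At) \<Longrightarrow> sc (ee At) (mg B S) = sc (ee (cm B At)) S"
  unfolding mg_def using scpa_comp[OF eff_tr[of B] id_tr[of uI] id_tr[of At] eff_tr[of At], of S uI]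
  by (simp add: eff_cmp)

theorem part3: "bij_betw RR (Tr A B) {S \<in> States Th (cm B At). mg B S \<in> refset Th uI At wt}"
  unfolding bij_betw_def
proof (intro conjI)
  show "inj_on RR (Tr A B)" unfolding inj_on_def using RR_inj by blast
  show "RR ` Tr A B = {S \<in> States Th (cm B At). mg B S \<in> refset Th uI At wt}"
  proof
    show "RR ` Tr A B \<subseteq> {S \<in> States Th (cm B At). mg B S \<in> refset Th uI At wt}"
    proof
      fix S assume "S \<in> RR ` Tr A B"
      then obtain C where C: "C \<in> Tr A B" "S = RR C" by blast
      obtain t c where t: "t \<in> Ts A B" "c < length t" "t ! c = C" using tr_in_test[OF C(1)] by blast
      define L where "L = map (mg B) (map RR t)"
      have L: "L \<in> Ts uI At" unfolding L_def mg_fun by (rule cond_map[OF map_RR_test[OF t(1)] mg_test])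
      have sL: "(\<Sum>j\<in>{..<length L}. L ! j) = wt"
        using map_RR_marg[OF t(1)] by (simp add: L_def sum_list_sum_nth atLeast0LessThan)
      have Lc: "L ! c = mg B S" using t C by (simp add: L_def)
      have cL: "c < length L" using t by (simp add: L_def)
      have "mg B S \<in> (\<lambda>j. L ! j) ` {..<length L}" using Lc cL by force
      then have "refines Th uI At (mg B S) wt"
        unfolding refines_def
        by (intro bexI[OF _ L] exI[of _ "{..<length L}"] conjI) (use sL in auto)
      moreover have "S \<in> States Th (cm B At)" using RR_tr[OF C(1)] C by (simp add: States_def)
      ultimately show "S \<in> {S \<in> States Th (cm B At). mg B S \<in> refset Th uI At wt}"
        by (simp add: refset_def)
    qed
    show "{S \<in> States Th (cm B At). mg B S \<in> refset Th uI At wt} \<subseteq> RR ` Tr A B"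
    proof
      fix S assume "S \<in> {S \<in> States Th (cm B At). mg B S \<in> refset Th uI At wt}"
      then have SS: "S \<in> States Th (cm B At)" and rf: "refines Th uI At (mg B S) wt"
        by (auto simp: refset_def)
      have ST: "S \<in> Tr uI (cm B At)" using SS by (simp add: States_def)
      obtain s Y0 m0 where s: "s \<in> Ts uI At" "Y0 \<subseteq> {..<length s}" "wt = (\<Sum>j\<in>Y0. s ! j)"
        "m0 \<in> Y0" "mg B S = s ! m0"
        using rf unfolding refines_def by blast
      have m0: "m0 < length s" using s by auto
      obtain p where p: "p \<ge> 0" "sc (ee (cm B At)) S = p *\<^sub>R ii uI" using state_prob[OF SS] by blast
      have b'T: "sc (pa (ii B) (ee At)) S \<in> Tr uI B"
        using sq_tr[OF ST pr_tr[OF id_tr[of B] eff_tr[of At]]] by simp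
      show "S \<in> RR ` Tr A B"
      proof (cases "p = 0")
        case True
        then have S0: "S = 0" using state_zero[OF SS] p by simp
        have "sc (sc (pa (ii B) (ee At)) S) (ee A) \<in> Tr A B" by (rule sq_tr[OF eff_tr b'T])
        then have "0 \<in> Tr A B" by (rule zero_tr)
        then show ?thesis using S0 RR0 by force
      next
        case False
        then have pp: "p > 0" using p by simp
        define S' where "S' = (1/p) *\<^sub>R S"
        have S't: "[S'] \<in> Ts uI (cm B At)" unfolding S'_def by (rule normalize[OF SS p(2) pp])
        define \<beta> where "\<beta> = (1/p) *\<^sub>R sc (pa (ii B) (ee At)) S"
        have bt: "[\<beta>] \<in> Ts uI B" unfolding \<beta>_def
          by (rule normalize[OF _ _ pp]) (use b'T e_margB[OF ST] p in \<open>auto simp: States_def\<close>)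
        have b1: "\<beta> \<in> States1 Th B" using test_states1[OF bt] .
        have bT: "\<beta> \<in> Tr uI B" using single_tr[OF bt] .
        have em0: "sc (ee At) (s ! m0) = p *\<^sub>R ii uI" using e_margAt[OF ST] s(5) p by simp
        obtain F \<alpha> ds where df: "distfam (Suc 1) F \<alpha> ds" using dist by blast
        have al: "\<And>i. i < 2 \<Longrightarrow> \<alpha> i \<in> States1 Th F" using df by (auto simp: distfam_def)
        define y where "y j = (if j = m0 then sc (sc (ins B (\<alpha> 0)) S') (ee At)
                                else sc (ins B (\<alpha> 1)) (pa \<beta> (ii At)))" for j
        have pbt: "[pa \<beta> (ii At)] \<in> Ts At (cm B At)" using par_single[OF bt id_test[of At]] by simp
        have yt: "[y j] \<in> Ts At (cm B (cm F At))" for j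
          using sq_single[OF caus1[of At] sq_single[OF S't ins_test[OF al[of 0]]]]
            sq_single[OF pbt ins_test[OF al[of 1]]] by (simp add: y_def)
        have Gam0: "[\<Sum>i<length s. sc (y i) (s ! i)] \<in> Ts uI (cm B (cm F At))"
          by (rule mk_gamma[OF s(1)]) (use yt in blast)
        define G1 where "G1 = sc (pa \<beta> (ii At)) (\<Sum>j\<in>{..<length s} - {m0}. s ! j)"
        have subT: "(\<Sum>j\<in>{..<length s} - {m0}. s ! j) \<in> Tr uI At" by (rule sub_sum_tr[OF s(1)]) auto
        have G1T: "G1 \<in> Tr uI (cm B At)" unfolding G1_def using sq_tr[OF subT single_tr[OF pbt]] .
        have insT0: "ins B (\<alpha> 0) \<in> Tr (cm B At) (cm B (cm F At))"
          using single_tr[OF ins_test[OF al[of 0]]] by simp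
        have insT1: "ins B (\<alpha> 1) \<in> Tr (cm B At) (cm B (cm F At))"
          using single_tr[OF ins_test[OF al[of 1]]] by simp
        have S'T: "S' \<in> Tr uI (cm B At)" using single_tr[OF S't] .
        have "(\<Sum>i<length s. sc (y i) (s ! i)) = sc (y m0) (s ! m0) + (\<Sum>i\<in>{..<length s} - {m0}. sc (y i) (s ! i))"
          by (rule sum.remove) (use m0 in auto)
        also have "sc (y m0) (s ! m0) = sc (ins B (\<alpha> 0)) S"
        proof -
          have "sc (y m0) (s ! m0) = sc (sc (ins B (\<alpha> 0)) S') (sc (ee At) (s ! m0))"
            using sq_assoc[OF test_nth[OF s(1) m0] eff_tr sq_tr[OF S'T insT0]] by (simp add: y_def)
          also have "\<dots> = p *\<^sub>R sc (ins B (\<alpha> 0)) S'" using em0 sq_tr[OF S'T insT0] by simp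
          also have "\<dots> = sc (ins B (\<alpha> 0)) S" using pp by (simp add: S'_def)
          finally show ?thesis .
        qed
        also have "(\<Sum>i\<in>{..<length s} - {m0}. sc (y i) (s ! i)) = sc (ins B (\<alpha> 1)) G1"
        proof -
          have "(\<Sum>i\<in>{..<length s} - {m0}. sc (y i) (s ! i))
              = (\<Sum>i\<in>{..<length s} - {m0}. sc (ins B (\<alpha> 1)) (sc (pa \<beta> (ii At)) (s ! i)))"
          proof (rule sum.cong[OF refl])
            fix i assume i: "i \<in> {..<length s} - {m0}"
            show "sc (y i) (s ! i) = sc (ins B (\<alpha> 1)) (sc (pa \<beta> (ii At)) (s ! i))"
              using i sq_assoc[OF test_nth[OF s(1)] single_tr[OF pbt] insT1, of i] by (simp add: y_def)
          qed
          then show ?thesis by (simp add: G1_def sc_sumr)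
        qed
        finally have Geq: "(\<Sum>i<length s. sc (y i) (s ! i)) = (\<Sum>i<Suc 1. sc (ins B (\<alpha> i)) ([S, G1] ! i))"
          by simp
        have M: "(\<Sum>i<Suc 1. mg B ([S, G1] ! i)) = wt"
        proof -
          have "(\<Sum>i<Suc 1. mg B ([S, G1] ! i)) = s ! m0 + (\<Sum>j\<in>{..<length s} - {m0}. s ! j)"
            using s(5) mg_beta[OF b1 subT] by (simp add: G1_def)
          also have "\<dots> = (\<Sum>j<length s. s ! j)" by (rule sum.remove[symmetric]) (use m0 in auto)
          also have "\<dots> = (\<Sum>j\<in>{..<length s} - Y0. s ! j) + (\<Sum>j\<in>Y0. s ! j)"
            using sum.subset_diff[OF s(2)] by simp
          also have "(\<Sum>j\<in>{..<length s} - Y0. s ! j) = 0"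
            by (rule sum.neutral) (use zero_outside[OF s(1,2) s(3)[symmetric]] in auto)
          finally show ?thesis using s(3) by simp
        qed
        obtain cs where cs: "cs \<in> Ts A B" "length cs = Suc 1" "\<And>i. i < Suc 1 \<Longrightarrow> RR (cs ! i) = [S, G1] ! i"
        proof -
          have len2: "length [S, G1] = Suc 1" by simp
          have GT': "[S, G1] ! i \<in> Tr uI (cm B At)" if "i < Suc 1" for i
            using that ST G1T by (cases i) auto
          have Gam: "[\<Sum>i<Suc 1. sc (ins B (\<alpha> i)) ([S, G1] ! i)] \<in> Ts uI (cm B (cm F At))"
            using Gam0 Geq by simp
          show ?thesis using gen[OF df len2 GT' Gam M] that by blast
        qed
        have "RR (cs ! 0) = S" using cs(3)[of 0] by simp
        moreover have "cs ! 0 \<in> Tr A B" using test_nth[OF cs(1)] cs(2) by simp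
        ultimately show ?thesis by force
      qed
    qed
  qed
qed

end


context optfaith begin

lemma pure_atomic:
  assumes C: "C \<in> Tr A B" and P: "pure Th (cm B At) (RR C)"
  shows "atomic Th A B C"
  unfolding atomic_def
proof (intro allI impI)
  fix D assume "refines Th A B D C"
  then obtain s Y0 j0 where s: "s \<in> Ts A B" "Y0 \<subseteq> {..<length s}" "C = (\<Sum>j\<in>Y0. s ! j)"
    "j0 \<in> Y0" "D = s ! j0"
    unfolding refines_def by blast
  have Rs: "map RR s \<in> Ts uI (cm B At)" by (rule map_RR_test[OF s(1)])
  have "RR C = (\<Sum>j\<in>Y0. map RR s ! j)" using s(2,3) by (auto simp: RR_sum intro!: sum.cong)
  moreover have "RR D \<in> (\<lambda>j. map RR s ! j) ` Y0" using s by force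
  ultimately have "refines Th uI (cm B At) (RR D) (RR C)"
    unfolding refines_def using Rs s(2) by (intro bexI[OF _ Rs] exI[of _ Y0]) auto
  then obtain lam where lam: "0 \<le> lam" "lam \<le> 1" "RR D = lam *\<^sub>R RR C"
    using P unfolding pure_def atomic_def by blast
  have DT: "D \<in> Tr A B" using s test_nth by auto
  have "D = lam *\<^sub>R C" by (rule RR_inj[OF DT scale_tr[OF C lam(1,2)]]) (simp add: lam(3) RR_scale)
  then show "\<exists>lam. 0 \<le> lam \<and> lam \<le> 1 \<and> D = lam *\<^sub>R C" using lam by blast
qed

lemma atomic_pure:
  assumes C: "C \<in> Tr A B" and At': "atomic Th A B C"
  shows "pure Th (cm B At) (RR C)"
proof -
  have RCT: "RR C \<in> Tr uI (cm B At)" by (rule RR_tr[OF C])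
  have "atomic Th uI (cm B At) (RR C)"
    unfolding atomic_def
  proof (intro allI impI)
    fix D assume "refines Th uI (cm B At) D (RR C)"
    then obtain T Y0 j0 where T: "T \<in> Ts uI (cm B At)" "Y0 \<subseteq> {..<length T}" "RR C = (\<Sum>j\<in>Y0. T ! j)"
      "j0 \<in> Y0" "D = T ! j0"
      unfolding refines_def by blast
    have j0: "j0 < length T" using T by auto
    have finY: "finite Y0" using T(2) finite_subset by blast
    have TT: "\<And>j. j \<in> Y0 \<Longrightarrow> T ! j \<in> Tr uI (cm B At)" using T(2) test_nth[OF T(1)] by auto
    obtain q where q: "q \<ge> 0" "sc (ee (cm B At)) (RR C) = q *\<^sub>R ii uI"
      using state_prob RCT by (metis States_def)
    have eY: "(\<Sum>j\<in>Y0. sc (ee (cm B At)) (T ! j)) = q *\<^sub>R ii uI" using q T(3) by (simp add: sc_sumr)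
    show "\<exists>lam. 0 \<le> lam \<and> lam \<le> 1 \<and> D = lam *\<^sub>R RR C"
    proof (cases "q = 0")
      case True
      have "sc (ee (cm B At)) (T ! j0) = 0"
        by (rule nonneg_sum0[OF finY _ _ T(4)]) (use eY True in \<open>auto intro: sq_tr[OF TT eff_tr]\<close>)
      then have "D = 0" using state_zero TT[OF T(4)] T(5) by (simp add: States_def)
      then show ?thesis by auto
    next
      case False
      then have qp: "q > 0" using q by simp
      obtain t c where t: "t \<in> Ts A B" "c < length t" "t ! c = C" using tr_in_test[OF C] by blast
      obtain F \<alpha> ds where df: "distfam (Suc 2) F \<alpha> ds" using dist by blast
      have al: "\<And>i. i < 3 \<Longrightarrow> \<alpha> i \<in> States1 Th F" using df by (auto simp: distfam_def)
      have insT: "\<And>i. i < 3 \<Longrightarrow> ins B (\<alpha> i) \<in> Tr (cm B At) (cm B (cm F At))"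
        using single_tr[OF ins_test[OF al]] by blast
      define k where "k j = (if j = j0 then 0 else (1::nat))" for j
      have k3: "k j < 3" for j by (simp add: k_def)
      define Lst where "Lst = map (\<lambda>j. sc (ins B (\<alpha> (k j))) (T ! j)) [0..<length T]"
      have Lst: "Lst \<in> Ts uI (cm B (cm F At))" unfolding Lst_def
        by (rule cond_idx[OF T(1)]) (use ins_test[OF al[OF k3]] in auto)
      define \<Delta> where "\<Delta> = (\<Sum>j\<in>Y0. sc (ins B (\<alpha> (k j))) (T ! j))"
      have "\<Delta> = (\<Sum>j\<in>Y0. Lst ! j)" unfolding \<Delta>_def Lst_def
        by (rule sum.cong) (use T(2) in auto)
      then have DT: "\<Delta> \<in> Tr uI (cm B (cm F At))" using sub_sum_tr[OF Lst] T(2) by (simp add: Lst_def)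
      have eD: "sc (ee (cm B (cm F At))) \<Delta> = q *\<^sub>R ii uI"
      proof -
        have "sc (ee (cm B (cm F At))) \<Delta> = (\<Sum>j\<in>Y0. sc (ee (cm B At)) (T ! j))"
          unfolding \<Delta>_def sc_sumr by (rule sum.cong[OF refl]) (use e_ch[OF ins_test[OF al[OF k3]] TT] in auto)
        then show ?thesis using eY by simp
      qed
      define Dn where "Dn = (1/q) *\<^sub>R \<Delta>"
      have Dnt: "[Dn] \<in> Ts uI (cm B (cm F At))" unfolding Dn_def
        by (rule normalize[OF _ eD qp]) (use DT in \<open>simp add: States_def\<close>)
      have DnT: "Dn \<in> Tr uI (cm B (cm F At))" using single_tr[OF Dnt] .
      define Rt where "Rt = map RR t"
      have Rt: "Rt \<in> Ts uI (cm B At)" unfolding Rt_def by (rule map_RR_test[OF t(1)])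
      define y where "y i = (if i = c then sc Dn (ee (cm B At)) else ins B (\<alpha> 2))" for i
      have yt: "[y i] \<in> Ts (cm B At) (cm B (cm F At))" for i
        using sq_single[OF caus1[of "cm B At"] Dnt] ins_test[OF al[of 2]] by (simp add: y_def)
      have Gam0: "[\<Sum>i<length Rt. sc (y i) (Rt ! i)] \<in> Ts uI (cm B (cm F At))"
        by (rule mk_gamma[OF Rt]) (use yt in blast)
      have lRt: "length Rt = length t" by (simp add: Rt_def)
      have cRt: "c \<in> {..<length t}" using t by simp
      define G1 where "G1 = (\<Sum>j\<in>Y0 - {j0}. T ! j)"
      define G2 where "G2 = (\<Sum>i\<in>{..<length t} - {c}. RR (t ! i))"
      define Gs where "Gs = [T ! j0, G1, G2]"
      have tT: "\<And>i. i < length t \<Longrightarrow> RR (t ! i) \<in> Tr uI (cm B At)" using RR_tr test_nth[OF t(1)] by blast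
      have Dsplit: "\<Delta> = sc (ins B (\<alpha> 0)) (T ! j0) + sc (ins B (\<alpha> 1)) G1"
      proof -
        have "\<Delta> = sc (ins B (\<alpha> (k j0))) (T ! j0) + (\<Sum>j\<in>Y0 - {j0}. sc (ins B (\<alpha> (k j))) (T ! j))"
          unfolding \<Delta>_def by (rule sum.remove[OF finY T(4)])
        also have "(\<Sum>j\<in>Y0 - {j0}. sc (ins B (\<alpha> (k j))) (T ! j)) = sc (ins B (\<alpha> 1)) G1"
          unfolding G1_def sc_sumr by (rule sum.cong) (auto simp: k_def)
        finally show ?thesis by (simp add: k_def)
      qed
      have Geq: "(\<Sum>i<length Rt. sc (y i) (Rt ! i)) = (\<Sum>i<Suc 2. sc (ins B (\<alpha> i)) (Gs ! i))"
      proof -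
        have "(\<Sum>i<length Rt. sc (y i) (Rt ! i)) = sc (y c) (Rt ! c) + (\<Sum>i\<in>{..<length t} - {c}. sc (y i) (Rt ! i))"
          unfolding lRt by (rule sum.remove[OF _ cRt]) simp
        also have "sc (y c) (Rt ! c) = \<Delta>"
        proof -
          have "sc (y c) (Rt ! c) = sc Dn (sc (ee (cm B At)) (RR C))"
            using sq_assoc[OF RCT eff_tr DnT] t by (simp add: y_def Rt_def)
          also have "\<dots> = \<Delta>" using q qp DT by (simp add: Dn_def)
          finally show ?thesis .
        qed
        also have "(\<Sum>i\<in>{..<length t} - {c}. sc (y i) (Rt ! i)) = sc (ins B (\<alpha> 2)) G2"
          unfolding G2_def sc_sumr by (rule sum.cong) (auto simp: y_def Rt_def)
        finally show ?thesis using Dsplit by (simp add: Gs_def numeral_2_eq_2 add.assoc)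
      qed
      have M: "(\<Sum>i<Suc 2. mg B (Gs ! i)) = wt"
      proof -
        have "(\<Sum>i<Suc 2. mg B (Gs ! i)) = mg B (T ! j0) + mg B G1 + mg B G2"
          by (simp add: Gs_def numeral_2_eq_2)
        also have "mg B (T ! j0) + mg B G1 = mg B (RR C)"
        proof -
          have "(\<Sum>j\<in>Y0. T ! j) = T ! j0 + G1" unfolding G1_def by (rule sum.remove[OF finY T(4)])
          then show ?thesis using T(3) by (simp add: mg_def sc_addr)
        qed
        also have "mg B (RR C) + mg B G2 = (\<Sum>i<length t. mg B (RR (t ! i)))"
        proof -
          have "(\<Sum>i<length t. mg B (RR (t ! i))) = mg B (RR (t ! c)) + (\<Sum>i\<in>{..<length t} - {c}. mg B (RR (t ! i)))"
            by (rule sum.remove[OF _ cRt]) simp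
          then show ?thesis using t by (simp add: G2_def mg_def sc_sumr)
        qed
        also have "\<dots> = wt" using map_RR_marg[OF t(1)] by (simp add: sum_map_nth)
        finally show ?thesis .
      qed
      have len: "length Gs = Suc 2" by (simp add: Gs_def)
      have G1T: "G1 \<in> Tr uI (cm B At)" unfolding G1_def by (rule sub_sum_tr[OF T(1)]) (use T(2) in auto)
      have G2T: "G2 \<in> Tr uI (cm B At)"
      proof -
        have "G2 = (\<Sum>i\<in>{..<length Rt} - {c}. Rt ! i)" unfolding G2_def lRt
          by (rule sum.cong) (auto simp: Rt_def)
        then show ?thesis using sub_sum_tr[OF Rt, of "{..<length Rt} - {c}"] by auto
      qed
      have GT: "Gs ! i \<in> Tr uI (cm B At)" if "i < Suc 2" for i
      proof -
        have "i = 0 \<or> i = 1 \<or> i = 2" using that by linarith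
        then show ?thesis using TT[OF T(4)] G1T G2T by (auto simp: Gs_def)
      qed
      have Gam: "[\<Sum>i<Suc 2. sc (ins B (\<alpha> i)) (Gs ! i)] \<in> Ts uI (cm B (cm F At))"
        using Gam0 Geq by simp
      obtain cs where cs: "cs \<in> Ts A B" "length cs = Suc 2" "\<And>i. i < Suc 2 \<Longrightarrow> RR (cs ! i) = Gs ! i"
        using gen[OF df len GT Gam M] by blast
      have sub: "{0::nat, 1} \<subseteq> {..<length cs}" using cs(2) by auto
      have s01: "(\<Sum>i\<in>{0::nat, 1}. cs ! i) = cs ! 0 + cs ! 1" by simp
      have c01: "cs ! 0 + cs ! 1 \<in> Tr A B" using sub_sum_tr[OF cs(1) sub] s01 by simp
      have "RR (cs ! 0 + cs ! 1) = T ! j0 + G1" using cs(3)[of 0] cs(3)[of 1] by (simp add: RR_add Gs_def)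
      also have "\<dots> = RR C" using T(3) sum.remove[OF finY T(4), of "\<lambda>j. T ! j"] by (simp add: G1_def)
      finally have "cs ! 0 + cs ! 1 = C" by (rule RR_inj[OF c01 C])
      then have "refines Th A B (cs ! 0) C"
        unfolding refines_def using cs(1) sub s01 by (intro bexI[OF _ cs(1)] exI[of _ "{0::nat,1}"]) auto
      then obtain lam where lam: "0 \<le> lam" "lam \<le> 1" "cs ! 0 = lam *\<^sub>R C"
        using At' unfolding atomic_def by blast
      have "D = RR (cs ! 0)" using cs(3)[of 0] T(5) by (simp add: Gs_def)
      then have "D = lam *\<^sub>R RR C" using lam(3) by (simp add: RR_scale)
      then show ?thesis using lam by blast
    qed
  qed
  then show ?thesis using RCT by (simp add: pure_def States_def)
qed

theorem part2: "C \<in> Tr A B \<Longrightarrow> atomic Th A B C \<longleftrightarrow> pure Th (cm B At) (RR C)"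
  using atomic_pure pure_atomic by blast

end


theorem mainTheorem11:
  fixes Th :: "('s, 't::real_normed_vector) opt"
    and A At :: 's and \<Psi> :: 't
  assumes framework: "opt_framework Th"
    and purification: "purification_postulate Th"
    and Psi_state: "\<Psi> \<in> States1 Th (cmp Th A At)"
    and Psi_pure: "pure Th (cmp Th A At) \<Psi>"
    and Psi_faithful: "dyn_faithful Th A At \<Psi>"
  defines "\<omega>t \<equiv> sq Th (pr Th (eff Th A) (idt Th At)) \<Psi>"
    and "R \<equiv> (\<lambda>C. sq Th (pr Th C (idt Th At)) \<Psi>)"
  shows "\<forall>B.
     bij_betw (map R) (Tests Th A B)
       {Rs \<in> Tests Th (unitS Th) (cmp Th B At).
          sum_list (map (\<lambda>Ri. sq Th (pr Th (eff Th B) (idt Th At)) Ri) Rs) = \<omega>t}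
     \<and> (\<forall>C \<in> Trans Th A B. atomic Th A B C \<longleftrightarrow> pure Th (cmp Th B At) (R C))
     \<and> bij_betw R (Trans Th A B)
         {S \<in> States Th (cmp Th B At).
            sq Th (pr Th (eff Th B) (idt Th At)) S \<in> refset Th (unitS Th) At \<omega>t}"
proof -
  interpret optfaith Th A At \<Psi>
    by unfold_locales (fact framework purification Psi_state Psi_pure Psi_faithful)+
  have Rd: "R = RR" using RR_fun R_def by simp
  have wd: "\<omega>t = wt" using \<omega>t_def by simp
  show ?thesis
  proof
    fix B
    have mgd: "(\<lambda>Ri. sq Th (pr Th (eff Th B) (idt Th At)) Ri) = mg B" using mg_fun by simp
    show "bij_betw (map R) (Tests Th A B)
       {Rs \<in> Tests Th (unitS Th) (cmp Th B At).
          sum_list (map (\<lambda>Ri. sq Th (pr Th (eff Th B) (idt Th At)) Ri) Rs) = \<omega>t}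
     \<and> (\<forall>C \<in> Trans Th A B. atomic Th A B C \<longleftrightarrow> pure Th (cmp Th B At) (R C))
     \<and> bij_betw R (Trans Th A B)
         {S \<in> States Th (cmp Th B At).
            sq Th (pr Th (eff Th B) (idt Th At)) S \<in> refset Th (unitS Th) At \<omega>t}"
      unfolding Rd wd mgd using part1[of B] part2[of _ B] part3[of B] by (simp add: mg_fun)
  qed
qed

end
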